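(* Let $m,n\geq2$, let $\mathbf p\in\mathbb R^m$, $\mathbf q\in\mathbb R^n$ be probability vectors with all entries strictly positive, and let $y(\mathbf p,\mathbf q)=(p_1,\dots,p_{m-1},1,q_1,\dots,q_{n-1})^T$. Let $S_1,\dots,S_{C(m,n)}$, $C(m,n)=\binom{mn}{m+n-1}$, be the subsets of $[mn]$ of cardinality $m+n-1$ (in lexicographic order), and $\mathfrak A_k=\mathfrak A(S_k)$. When $\det(\mathfrak A_k)\neq0$ and $\mathfrak A_k^{-1}y(\mathbf p,\mathbf q)\in\mathcal P_{m+n-1}$, let $P_k$ be the $m\times n$ matrix with $(P_k)_{\phi(i_l)}=x_l$ for $S_k=\{i_1<\dots<i_{m+n-1}\}$ and $x=\mathfrak A_k^{-1}y(\mathbf p,\mathbf q)$, and all other entries $0$. Then $$\mathcal C_e(\mathbf p,\mathbf q)=\mathscr C(\mathbf p,\mathbf q)=\{P_k:\det(\mathfrak A_k)\neq0,\ \mathfrak A_k^{-1}y(\mathbf p,\mathbf q)\in\mathcal P_{m+n-1},\ 1\le k\le C(m,n)\}.$$ Moreover, for $H$ a strictly concave function on $\mathcal C(\mathbf p,\mathbf q)$ such as the Shannon, Rényi or Tsallis entropy, setting $H_k=H(P_k)$ if $\det(\mathfrak A_k)\neq0$ and $\mathfrak A_k^{-1}y(\mathbf p,\mathbf q)\in\mathcal P_{m+n-1}$, and $H_k=\infty$ otherwise, one has $$\inf_{P\in\mathcal C(\mathbf p,\mathbf q)}H(P)=\min_{P\in\mathscr C(\mathbf p,\mathbf q)}H(P)=\min\{H_k:1\le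 k\le C(m,n)\}.$$
   Context: $\mathcal P_N$ is the set of probability vectors in $\mathbb R^N$ (nonnegative entries summing to $1$). $\mathcal C(\mathbf p,\mathbf q)$: nonnegative $m\times n$ matrices with row sums $p_i$ and column sums $q_j$; $\mathcal C_e(\mathbf p,\mathbf q)$: its extreme points; $V(P)=\{(i,j):p_{i,j}\neq0\}$. $\mathscr C(\mathbf p,\mathbf q)$: the set of $P\in\mathcal C(\mathbf p,\mathbf q)$ with $V(P)\subset T$ for some tree $T\subset[m]\times[n]$ with $|T|=m+n-1$ (graph notions: distinct points adjacent iff they share a row or column; a circuit is a cyclic sequence of $s\ge4$ pairwise distinct points $v_k=(i_k,j_k)$ with, indices mod $s$, $v_k,v_{k+1}$ adjacent and $(i_{k+2}-i_k)(j_{k+2}-j_k)\ne0$; a tree is a connected subset with no circuit). $\phi(i)=(t,r)$ for $i=(t-1)n+r$, $t\in[m]$, $r\in[n]$. For $S=\{i_1<\dots<i_{m+n-1}\}$, the structure matrix $\mathfrak A(S)=(a_{s,k})$ is the $(m+n-1)\times(m+n-1)$ matrix with, for $\phi(i_k)=(t,r)$: $a_{s,k}=1$ if $s=t<m$; $a_{s,k}=1$ if $s=m$; $a_{s,k}=1$ if $s=m+r<m+n$; $a_{s,k}=0$ otherwise. Rényi entropy $\frac1{1-\alpha}\log\sum p_{i,j}^\alpha$ and Tsallis entropy $\frac1{1-\alpha}(\sum p_{i,j}^\alpha-1)$, $\alpha\ge0$, $\alpha\ne1$. *)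

theory Defs
  imports "Jordan_Normal_Form.Determinant" "Jordan_Normal_Form.Gauss_Jordan_Elimination"
    "HOL-Library.Extended_Real"
begin

text \<open>Matrices are functions nat => nat => real, indexed from 1 (rows 1..m, columns 1..n),
  required to vanish outside [m] x [n]. Vectors are functions nat => real indexed from 1.\<close>

type_synonym rmat = "nat \<Rightarrow> nat \<Rightarrow> real"

definition prob_vec :: "nat \<Rightarrow> (nat \<Rightarrow> real) \<Rightarrow> bool" where
  "prob_vec N p \<longleftrightarrow> (\<forall>i\<in>{1..N}. 0 \<le> p i) \<and> (\<Sum>i=1..N. p i) = 1"

definition coupling :: "nat \<Rightarrow> nat \<Rightarrow> (nat \<Rightarrow> real) \<Rightarrow> (nat \<Rightarrow> real) \<Rightarrow> rmat set" where
  "coupling m n p q = {P. (\<forall>i j. P i j \<noteq> 0 \<longrightarrow> i \<in> {1..m} \<and> j \<in> {1..n}) \<and>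
      (\<forall>i j. 0 \<le> P i j) \<and>
      (\<forall>i\<in>{1..m}. (\<Sum>j=1..n. P i j) = p i) \<and>
      (\<forall>j\<in>{1..n}. (\<Sum>i=1..m. P i j) = q j)}"

definition extreme_points :: "rmat set \<Rightarrow> rmat set" where
  "extreme_points S = {P \<in> S. \<not> (\<exists>Q\<in>S. \<exists>R\<in>S. Q \<noteq> R \<and>
      (\<exists>t::real. 0 < t \<and> t < 1 \<and> P = (\<lambda>i j. t * Q i j + (1 - t) * R i j)))}"

definition support :: "rmat \<Rightarrow> (nat \<times> nat) set" where
  "support P = {(i, j). P i j \<noteq> 0}"

definition adjacent :: "nat \<times> nat \<Rightarrow> nat \<times> nat \<Rightarrow> bool" where
  "adjacent u v \<longleftrightarrow> u \<noteq> v \<and> (fst u = fst v \<or> snd u = snd v)"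

definition has_circuit :: "(nat \<times> nat) set \<Rightarrow> bool" where
  "has_circuit T \<longleftrightarrow> (\<exists>s::nat. \<exists>v::nat \<Rightarrow> nat \<times> nat. 4 \<le> s \<and> inj_on v {..<s} \<and>
      (\<forall>k<s. v k \<in> T) \<and>
      (\<forall>k<s. adjacent (v k) (v ((k + 1) mod s))) \<and>
      (\<forall>k<s. (real (fst (v ((k + 2) mod s))) - real (fst (v k))) *
              (real (snd (v ((k + 2) mod s))) - real (snd (v k))) \<noteq> 0))"

definition connected_set :: "(nat \<times> nat) set \<Rightarrow> bool" where
  "connected_set T \<longleftrightarrow> (\<forall>u\<in>T. \<forall>v\<in>T. (\<lambda>a b. a \<in> T \<and> b \<in> T \<and> adjacent a b)\<^sup>*\<^sup>* u v)"

definition is_tree :: "(nat \<times> nat) set \<Rightarrow> bool" where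
  "is_tree T \<longleftrightarrow> connected_set T \<and> \<not> has_circuit T"

definition tree_couplings :: "nat \<Rightarrow> nat \<Rightarrow> (nat \<Rightarrow> real) \<Rightarrow> (nat \<Rightarrow> real) \<Rightarrow> rmat set" where
  "tree_couplings m n p q = {P \<in> coupling m n p q. \<exists>T. T \<subseteq> {1..m} \<times> {1..n} \<and> is_tree T \<and>
      card T = m + n - 1 \<and> support P \<subseteq> T}"

definition phi :: "nat \<Rightarrow> nat \<Rightarrow> nat \<times> nat" where
  "phi n i = ((i - 1) div n + 1, (i - 1) mod n + 1)"

definition elem :: "nat set \<Rightarrow> nat \<Rightarrow> nat" where
  "elem S k = sorted_list_of_set S ! (k - 1)"

definition struct_entry :: "nat \<Rightarrow> nat \<Rightarrow> nat set \<Rightarrow> nat \<Rightarrow> nat \<Rightarrow> real" where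
  "struct_entry m n S s k = (let (t, r) = phi n (elem S k) in
     if (s = t \<and> t < m) \<or> s = m \<or> (s = m + r \<and> m + r < m + n) then 1 else 0)"

definition struct_mat :: "nat \<Rightarrow> nat \<Rightarrow> nat set \<Rightarrow> real mat" where
  "struct_mat m n S = mat (m + n - 1) (m + n - 1) (\<lambda>(s, k). struct_entry m n S (s + 1) (k + 1))"

definition yvec :: "nat \<Rightarrow> nat \<Rightarrow> (nat \<Rightarrow> real) \<Rightarrow> (nat \<Rightarrow> real) \<Rightarrow> real vec" where
  "yvec m n p q = vec (m + n - 1) (\<lambda>s. if s + 1 < m then p (s + 1) else if s + 1 = m then 1
      else q (s + 1 - m))"

definition sol :: "nat \<Rightarrow> nat \<Rightarrow> (nat \<Rightarrow> real) \<Rightarrow> (nat \<Rightarrow> real) \<Rightarrow> nat set \<Rightarrow> real vec" where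
  "sol m n p q S = the (mat_inverse (struct_mat m n S)) *\<^sub>v yvec m n p q"

definition feasible :: "nat \<Rightarrow> nat \<Rightarrow> (nat \<Rightarrow> real) \<Rightarrow> (nat \<Rightarrow> real) \<Rightarrow> nat set \<Rightarrow> bool" where
  "feasible m n p q S \<longleftrightarrow> det (struct_mat m n S) \<noteq> 0 \<and>
      prob_vec (m + n - 1) (\<lambda>l. sol m n p q S $ (l - 1))"

definition P_of :: "nat \<Rightarrow> nat \<Rightarrow> (nat \<Rightarrow> real) \<Rightarrow> (nat \<Rightarrow> real) \<Rightarrow> nat set \<Rightarrow> rmat" where
  "P_of m n p q S = (\<lambda>i j. if \<exists>l\<in>{1..m + n - 1}. phi n (elem S l) = (i, j)
      then sol m n p q S $ ((THE l. l \<in> {1..m + n - 1} \<and> phi n (elem S l) = (i, j)) - 1) else 0)"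

definition index_sets :: "nat \<Rightarrow> nat \<Rightarrow> nat set set" where
  "index_sets m n = {S. S \<subseteq> {1..m * n} \<and> card S = m + n - 1}"

definition strictly_concave_on :: "rmat set \<Rightarrow> (rmat \<Rightarrow> real) \<Rightarrow> bool" where
  "strictly_concave_on C H \<longleftrightarrow> (\<forall>P\<in>C. \<forall>Q\<in>C. \<forall>t::real. P \<noteq> Q \<and> 0 < t \<and> t < 1 \<longrightarrow>
      H (\<lambda>i j. t * P i j + (1 - t) * Q i j) > t * H P + (1 - t) * H Q)"

definition H_k :: "nat \<Rightarrow> nat \<Rightarrow> (nat \<Rightarrow> real) \<Rightarrow> (nat \<Rightarrow> real) \<Rightarrow> (rmat \<Rightarrow> real) \<Rightarrow> nat set \<Rightarrow> ereal" where
  "H_k m n p q H S = (if feasible m n p q S then ereal (H (P_of m n p q S)) else \<infinity>)"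

end

theory Submission
  imports Defs
begin

definition zm :: "(nat \<times> nat) set \<Rightarrow> (nat \<times> nat \<Rightarrow> real) \<Rightarrow> bool" where
  "zm F x \<longleftrightarrow> (\<forall>i. sum x {c\<in>F. fst c = i} = 0) \<and> (\<forall>j. sum x {c\<in>F. snd c = j} = 0)"

definition indep :: "(nat \<times> nat) set \<Rightarrow> bool" where
  "indep F \<longleftrightarrow> (\<forall>x. zm F x \<longrightarrow> (\<forall>c\<in>F. x c = 0))"

definition cl :: "nat + nat \<Rightarrow> nat + nat \<Rightarrow> nat \<times> nat" where
  "cl a b = ((if isl a then projl a else projl b), (if isl a then projr b else projr a))"

lemma has_circuit_mono: "has_circuit F \<Longrightarrow> F \<subseteq> G \<Longrightarrow> has_circuit G"
  unfolding has_circuit_def by blast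

lemma cl_adj: "isl a \<noteq> isl b \<Longrightarrow> isl b \<noteq> isl c \<Longrightarrow> a \<noteq> c \<Longrightarrow> adjacent (cl a b) (cl b c)"
  by (cases a; cases b; cases c) (auto simp: cl_def adjacent_def)

lemma cl_far: "isl a \<noteq> isl b \<Longrightarrow> isl b \<noteq> isl c \<Longrightarrow> isl c \<noteq> isl d \<Longrightarrow> a \<noteq> c \<Longrightarrow> b \<noteq> d
   \<Longrightarrow> fst (cl c d) \<noteq> fst (cl a b) \<and> snd (cl c d) \<noteq> snd (cl a b)"
  by (cases a; cases b; cases c; cases d) (auto simp: cl_def)

lemma cl_inj: "isl a \<noteq> isl b \<Longrightarrow> isl c \<noteq> isl d \<Longrightarrow> cl a b = cl c d \<Longrightarrow> (a = c \<and> b = d) \<or> (a = d \<and> b = c)"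
  by (cases a; cases b; cases c; cases d) (auto simp: cl_def)

lemma circuit_from_cycle:
  fixes Z :: "nat \<Rightarrow> nat + nat"
  assumes s4: "4 \<le> s" and per: "\<And>k. Z k = Z (k mod s)" and inj: "inj_on Z {..<s}"
    and alt: "\<And>k. isl (Z (Suc k)) \<noteq> isl (Z k)"
    and cells: "\<And>k. k < s \<Longrightarrow> cl (Z k) (Z (Suc k)) \<in> F"
  shows "has_circuit F"
proof -
  have Zeq: "Z i = Z j \<longleftrightarrow> i mod s = j mod s" for i j
  proof
    assume "Z i = Z j"
    then have "Z (i mod s) = Z (j mod s)" using per by metis
    then show "i mod s = j mod s" using inj s4 by (auto dest: inj_onD)
  next
    assume "i mod s = j mod s" then show "Z i = Z j" using per by metis
  qed
  define v where "v k = cl (Z k) (Z (Suc k))" for k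
  have vmod: "v (k mod s) = v k" for k
    unfolding v_def using per[of k] per[of "Suc k"] per[of "Suc (k mod s)"] mod_Suc_eq[of k s]
    by (metis mod_mod_trivial)
  have ne1: "Z k \<noteq> Z (k + 2)" for k
  proof
    assume "Z k = Z (k+2)"
    then have "k mod s = (k + 2) mod s" using Zeq by blast
    then have "s dvd (k+2) - k" using mod_eq_dvd_iff_nat[of k "k+2" s] by simp
    then have "s dvd 2" by simp
    then show False using s4 dvd_imp_le[of s 2] by simp
  qed
  have isl2: "isl (Z (k+2)) = isl (Z k)" for k using alt[of k] alt[of "Suc k"] by auto
  have adj: "adjacent (v k) (v ((k + 1) mod s))" for k
  proof -
    have e: "v ((k+1) mod s) = cl (Z (Suc k)) (Z (Suc (Suc k)))" using vmod v_def by simp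
    have "Z k \<noteq> Z (Suc (Suc k))" using ne1[of k] by simp
    moreover have "isl (Z (Suc (Suc k))) = isl (Z k)" using isl2[of k] by simp
    moreover have "isl (Z (Suc (Suc k))) \<noteq> isl (Z (Suc k))" using alt[of "Suc k"] by simp
    ultimately have "adjacent (cl (Z k) (Z (Suc k))) (cl (Z (Suc k)) (Z (Suc (Suc k))))"
      using alt[of k] cl_adj by metis
    then show ?thesis unfolding e by (simp add: v_def)
  qed
  have prod: "(real (fst (v ((k + 2) mod s))) - real (fst (v k))) *
              (real (snd (v ((k + 2) mod s))) - real (snd (v k))) \<noteq> 0" for k
  proof -
    have e: "v ((k+2) mod s) = cl (Z (k+2)) (Z (Suc (k+2)))" using vmod v_def by simp
    have n1: "Z k \<noteq> Z (k+2)" using ne1 by blast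
    have n2: "Z (Suc k) \<noteq> Z (Suc k + 2)" using ne1 by blast
    have i1: "isl (Z (k+2)) = isl (Z k)" by (rule isl2)
    have i2: "isl (Z (Suc k + 2)) = isl (Z (Suc k))" by (rule isl2)
    have "fst (cl (Z (k+2)) (Z (Suc (k+2)))) \<noteq> fst (cl (Z k) (Z (Suc k))) \<and>
          snd (cl (Z (k+2)) (Z (Suc (k+2)))) \<noteq> snd (cl (Z k) (Z (Suc k)))"
      using n1 n2 alt[of k] alt[of "Suc k"] alt[of "Suc (Suc k)"] cl_far[of "Z k" "Z (Suc k)" "Z (k+2)" "Z (Suc (k+2))"]
      by simp
    then show ?thesis unfolding e by (simp add: v_def)
  qed
  have vinj: "inj_on v {..<s}"
  proof (rule inj_onI)
    fix i j assume i: "i \<in> {..<s}" and j: "j \<in> {..<s}" and vij: "v i = v j"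
    show "i = j"
    proof (cases "isl (Z i) = isl (Z j)")
      case True
      then have "Z i = Z j" using vij alt[of i] alt[of j] cl_inj[of "Z i" "Z (Suc i)" "Z j" "Z (Suc j)"] unfolding v_def
        by auto
      then show ?thesis using inj i j by (auto dest: inj_onD)
    next
      case False
      then have "Z i = Z (Suc j) \<and> Z (Suc i) = Z j" using vij alt[of i] alt[of j] cl_inj[of "Z i" "Z (Suc i)" "Z j" "Z (Suc j)"] unfolding v_def
        by auto
      then have "i mod s = Suc j mod s" "Suc i mod s = j mod s" using Zeq by blast+
      then have "i = Suc j mod s" "Suc i mod s = j" using i j by auto
      then show ?thesis using i j s4 by (auto simp: mod_Suc split: if_splits)
    qed
  qed
  show ?thesis unfolding has_circuit_def
    apply (rule exI[of _ s], rule exI[of _ v])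
    using s4 vinj adj prod cells v_def by auto
qed


lemma cl_sym: "isl a \<noteq> isl b \<Longrightarrow> cl a b = cl b a"
  by (cases a; cases b) (auto simp: cl_def)

lemma even_mod_even: "even (s::nat) \<Longrightarrow> even (k mod s) = even k"
  by (simp add: dvd_mod_iff)

lemma no_leaf_circuit:
  assumes fin: "finite F" and ne: "F \<noteq> {}"
    and row: "\<And>c. c\<in>F \<Longrightarrow> \<exists>d\<in>F. d \<noteq> c \<and> fst d = fst c"
    and col: "\<And>c. c\<in>F \<Longrightarrow> \<exists>d\<in>F. d \<noteq> c \<and> snd d = snd c"
  shows "has_circuit F"
proof -
  obtain c0 where c0: "c0 \<in> F" using ne by blast
  define rm where "rm c = (SOME d. d\<in>F \<and> d \<noteq> c \<and> fst d = fst c)" for c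
  define cm where "cm c = (SOME d. d\<in>F \<and> d \<noteq> c \<and> snd d = snd c)" for c
  have rm: "rm c \<in> F \<and> rm c \<noteq> c \<and> fst (rm c) = fst c" if "c \<in> F" for c
    unfolding rm_def using someI_ex[OF row[OF that, unfolded Bex_def]] by blast
  have cm: "cm c \<in> F \<and> cm c \<noteq> c \<and> snd (cm c) = snd c" if "c \<in> F" for c
    unfolding cm_def using someI_ex[OF col[OF that, unfolded Bex_def]] by blast
  define w where "w = rec_nat c0 (\<lambda>k c. if even k then rm c else cm c)"
  have w0: "w 0 = c0" and wS: "w (Suc k) = (if even k then rm (w k) else cm (w k))" for k
    by (simp_all add: w_def)
  have wF: "w k \<in> F" for k by (induction k) (auto simp: w0 wS c0 rm cm)
  have wne: "w (Suc k) \<noteq> w k" for k using rm[OF wF[of k]] cm[OF wF[of k]] by (auto simp: wS)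
  have wr: "even k \<Longrightarrow> fst (w (Suc k)) = fst (w k)" for k using rm[OF wF[of k]] by (simp add: wS)
  have wc: "odd k \<Longrightarrow> snd (w (Suc k)) = snd (w k)" for k using cm[OF wF[of k]] by (simp add: wS)
  define U where "U k = (if even k then Inl (fst (w k)) else Inr (snd (w k)) :: nat + nat)" for k
  have Uisl: "isl (U k) = even k" for k by (simp add: U_def)
  have Ucl: "cl (U k) (U (Suc k)) = w (Suc k)" for k
    using wr[of k] wc[of k] by (cases "even k") (auto simp: U_def cl_def prod_eq_iff)
  have Urange: "range U \<subseteq> Inl ` fst ` F \<union> Inr ` snd ` F" using wF by (auto simp: U_def)
  have "\<not> inj U"
  proof
    assume "inj U"
    moreover have "finite (range U)" using finite_subset[OF Urange] fin by blast
    ultimately have "finite (UNIV :: nat set)" using finite_imageD by blast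
    then show False by simp
  qed
  then have ex: "\<exists>b. \<exists>a<b. U a = U b" unfolding inj_def by (metis linorder_neqE_nat)
  define b where "b = (LEAST b. \<exists>a<b. U a = U b)"
  obtain a where ab: "a < b" "U a = U b" using LeastI_ex[OF ex] b_def by blast
  have injb: "inj_on U {..<b}"
  proof (rule inj_onI, rule ccontr)
    fix x y assume x: "x \<in> {..<b}" and y: "y \<in> {..<b}" and xy: "U x = U y" "x \<noteq> y"
    have "\<exists>a<max x y. U a = U (max x y)"
    proof (cases "x < y")
      case True then show ?thesis using xy by (auto simp: max_def)
    next
      case False then have "y < x" using xy by simp
      then show ?thesis using xy by (auto simp: max_def intro!: exI[of _ y])
    qed
    then have "b \<le> max x y" unfolding b_def by (rule Least_le)
    with x y show False by auto
  qed
  have par: "even a = even b" using ab(2) Uisl by metis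
  define s where "s = b - a"
  have seven: "even s" using par ab(1) unfolding s_def by presburger
  have s2: "s \<noteq> 2"
  proof
    assume "s = 2" then have b2: "b = Suc (Suc a)" using ab by (auto simp: s_def)
    have "w (Suc (Suc a)) = cl (U (Suc a)) (U (Suc (Suc a)))" using Ucl by simp
    also have "\<dots> = cl (U (Suc a)) (U a)" using ab(2) b2 by simp
    also have "\<dots> = cl (U a) (U (Suc a))" using cl_sym Uisl by simp
    also have "\<dots> = w (Suc a)" using Ucl by simp
    finally show False using wne by metis
  qed
  have s4: "4 \<le> s" using seven s2 ab(1) unfolding s_def by presburger
  define Z where "Z k = U (a + k mod s)" for k
  show ?thesis
  proof (rule circuit_from_cycle[of s Z])
    show "4 \<le> s" by fact
    show "Z k = Z (k mod s)" for k by (simp add: Z_def)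
    show "inj_on Z {..<s}"
    proof (rule inj_onI)
      fix x y assume "x \<in> {..<s}" "y \<in> {..<s}" "Z x = Z y"
      then have "U (a + x) = U (a + y)" "a + x \<in> {..<b}" "a + y \<in> {..<b}"
        by (auto simp: Z_def s_def)
      then show "x = y" using injb by (auto dest: inj_onD)
    qed
    show "isl (Z (Suc k)) \<noteq> isl (Z k)" for k
      using even_mod_even[OF seven, of k] even_mod_even[OF seven, of "Suc k"]
      by (simp add: Z_def Uisl)
    show "cl (Z k) (Z (Suc k)) \<in> F" if "k < s" for k
    proof -
      have "Z (Suc k) = U (Suc (a + k))"
      proof (cases "Suc k < s")
        case True then show ?thesis by (simp add: Z_def)
      next
        case False then have "Suc k = s" using that by simp
        then have "Suc (a + k) = b" using ab(1) by (simp add: s_def)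
        then show ?thesis using ab \<open>Suc k = s\<close> by (simp add: Z_def)
      qed
      moreover have "Z k = U (a + k)" using that by (simp add: Z_def)
      ultimately show ?thesis using Ucl wF by simp
    qed
  qed
qed


lemma inv_sum_zero:
  fixes f :: "nat \<Rightarrow> real"
  assumes "finite A" "\<And>k. k\<in>A \<Longrightarrow> \<sigma> k \<in> A" "\<And>k. k\<in>A \<Longrightarrow> \<sigma> (\<sigma> k) = k"
    "\<And>k. k\<in>A \<Longrightarrow> f (\<sigma> k) = - f k"
  shows "sum f A = 0"
proof -
  have "sum f A = sum (\<lambda>k. f (\<sigma> k)) A"
    by (rule sum.reindex_bij_witness[where i=\<sigma> and j=\<sigma>]) (auto simp: assms)
  also have "\<dots> = sum (\<lambda>k. - f k) A" by (rule sum.cong) (auto simp: assms)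
  also have "\<dots> = - sum f A" by (simp add: sum_negf)
  finally show ?thesis by simp
qed

lemma sucmod_facts:
  assumes "k < s" "even s" "(4::nat) \<le> s"
  shows "Suc k mod s < s" "(k + s - 1) mod s < s"
    "Suc ((k + s - 1) mod s) mod s = k" "(Suc k mod s + s - 1) mod s = k"
    "(-1::real) ^ (Suc k mod s) = - ((-1) ^ k)" "(-1::real) ^ ((k + s - 1) mod s) = - ((-1) ^ k)"
proof -
  show "Suc k mod s < s" "(k + s - 1) mod s < s" using assms by auto
  show "Suc ((k + s - 1) mod s) mod s = k"
  proof (cases "k = 0")
    case True then show ?thesis using assms by simp
  next
    case False
    then have "(k + s - 1) mod s = k - 1" using assms
      by (metis Nat.add_diff_assoc2 One_nat_def Suc_leI add.commute diff_less less_imp_diff_less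
          mod_add_self2 mod_less neq0_conv zero_less_one)
    then show ?thesis using assms False by simp
  qed
  show "(Suc k mod s + s - 1) mod s = k"
  proof (cases "Suc k < s")
    case True then show ?thesis using assms by simp
  next
    case False then have "Suc k = s" using assms by simp
    then show ?thesis by simp
  qed
  show "(-1::real) ^ (Suc k mod s) = - ((-1) ^ k)"
  proof (cases "Suc k < s")
    case True then show ?thesis by simp
  next
    case False then have "Suc k = s" using assms by simp
    then have "odd k" using assms by presburger
    then show ?thesis using \<open>Suc k = s\<close> by simp
  qed
  show "(-1::real) ^ ((k + s - 1) mod s) = - ((-1) ^ k)"
  proof (cases "k = 0")
    case True
    then have "(k + s - 1) mod s = s - 1" using assms by simp
    moreover have "odd (s - 1)" using assms by presburger
    ultimately show ?thesis using True by simp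
  next
    case False
    then have "(k + s - 1) mod s = k - 1" using assms
      by (metis Nat.add_diff_assoc2 One_nat_def Suc_leI add.commute diff_less less_imp_diff_less
          mod_add_self2 mod_less neq0_conv zero_less_one)
    moreover have "(-1::real) ^ k = - ((-1) ^ (k - 1))"
    proof -
      obtain k' where "k = Suc k'" using False not0_implies_Suc by blast
      then show ?thesis by simp
    qed
    ultimately show ?thesis by simp
  qed
qed

lemma circuit_dep:
  assumes fin: "finite T" and hc: "has_circuit T" shows "\<not> indep T"
proof -
  obtain s :: nat and v :: "nat \<Rightarrow> nat \<times> nat" where s4: "4 \<le> s" and vinj: "inj_on v {..<s}" and vT: "\<forall>k<s. v k \<in> T"
    and adj: "\<forall>k<s. adjacent (v k) (v ((k+1) mod s))"
    and pr: "\<forall>k<s. (real (fst (v ((k + 2) mod s))) - real (fst (v k))) *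
              (real (snd (v ((k + 2) mod s))) - real (snd (v k))) \<noteq> 0"
    using hc unfolding has_circuit_def by blast
  define R where "R k = (fst (v k) = fst (v (Suc k mod s)))" for k
  have Rnot: "R k \<longleftrightarrow> snd (v k) \<noteq> snd (v (Suc k mod s))" if "k < s" for k
    using adj[rule_format, OF that] unfolding adjacent_def R_def by (auto simp: prod_eq_iff)
  have Ralt: "R (Suc k mod s) \<longleftrightarrow> \<not> R k" if "k < s" for k
  proof -
    have e: "Suc (Suc k mod s) mod s = (k+2) mod s" by (simp add: mod_Suc_eq)
    have l: "Suc k mod s < s" using s4 by simp
    have p: "fst (v ((k+2) mod s)) \<noteq> fst (v k)" "snd (v ((k+2) mod s)) \<noteq> snd (v k)"
      using pr[rule_format, OF that] by auto
    show ?thesis using Rnot[OF that] Rnot[OF l] p unfolding R_def e by auto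
  qed
  have Rpar: "R k \<longleftrightarrow> (R 0 \<longleftrightarrow> even k)" if "k < s" for k
    using that
  proof (induction k)
    case 0 show ?case by simp
  next
    case (Suc k)
    then have k: "k < s" by simp
    have "Suc k mod s = Suc k" using Suc.prems by simp
    then show ?case using Ralt[OF k] Suc.IH[OF k] by simp
  qed
  have seven: "even s"
  proof (rule ccontr)
    assume odd: "odd s"
    have l: "s - 1 < s" using s4 by simp
    have "Suc (s-1) mod s = 0" using s4 by simp
    with Ralt[OF l] have "R 0 \<longleftrightarrow> \<not> R (s-1)" by simp
    moreover have "even (s - 1)" using odd s4 by presburger
    then have "R (s-1) \<longleftrightarrow> R 0" using Rpar[OF l] by simp
    ultimately show False by simp
  qed
  define pr where "pr k = (k + s - 1) mod s" for k
  note F = sucmod_facts[OF _ seven s4, folded pr_def]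
  define x where "x c = (if c \<in> v ` {..<s} then (-1::real) ^ (inv_into {..<s} v c) else 0)" for c
  have xv: "x (v k) = (-1)^k" if "k<s" for k using vinj that by (simp add: x_def)
  have vsub: "v ` {..<s} \<subseteq> T" using vT by auto
  have key: "sum x {c\<in>T. P c} = (\<Sum>k\<in>{k. k<s \<and> P (v k)}. (-1)^k)" for P
  proof -
    have "sum x {c\<in>T. P c} = sum x {c \<in> v ` {..<s}. P c}"
      by (rule sum.mono_neutral_right) (use fin vsub in \<open>auto simp: x_def\<close>)
    also have "{c \<in> v ` {..<s}. P c} = v ` {k. k<s \<and> P (v k)}" by auto
    also have "sum x (v ` {k. k<s \<and> P (v k)}) = sum (x \<circ> v) {k. k<s \<and> P (v k)}"
      by (rule sum.reindex) (rule inj_on_subset[OF vinj], auto)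
    also have "\<dots> = (\<Sum>k\<in>{k. k<s \<and> P (v k)}. (-1)^k)" by (rule sum.cong) (auto simp: xv)
    finally show ?thesis .
  qed
  have Rpr: "R (pr k) \<longleftrightarrow> \<not> R k" if "k < s" for k
    using Ralt[OF F(2)[OF that]] F(3)[OF that] by simp
  have zmx: "zm T x"
    unfolding zm_def
  proof (intro conjI allI)
    fix i
    define \<sigma> where "\<sigma> k = (if R k then Suc k mod s else pr k)" for k
    show "sum x {c\<in>T. fst c = i} = 0"
      unfolding key
    proof (rule inv_sum_zero[where \<sigma>=\<sigma>])
      fix k assume k: "k \<in> {k. k < s \<and> fst (v k) = i}"
      then have ks: "k < s" by simp
      show "\<sigma> k \<in> {k. k < s \<and> fst (v k) = i}"
      proof (cases "R k")
        case True then show ?thesis using k F(1)[OF ks] unfolding \<sigma>_def R_def by simp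
      next
        case False then have "R (pr k)" using Rpr[OF ks] by simp
        then have "fst (v (pr k)) = fst (v (Suc (pr k) mod s))" unfolding R_def .
        then have "fst (v (pr k)) = fst (v k)" using F(3)[OF ks] by metis
        moreover have "\<sigma> k = pr k" using False unfolding \<sigma>_def by simp
        ultimately show ?thesis using k F(2)[OF ks] by simp
      qed
      show "\<sigma> (\<sigma> k) = k"
      proof (cases "R k")
        case True then have "\<not> R (Suc k mod s)" using Ralt[OF ks] by simp
        then show ?thesis using True F(4)[OF ks] unfolding \<sigma>_def by simp
      next
        case False then have "R (pr k)" using Rpr[OF ks] by simp
        then show ?thesis using False F(3)[OF ks] unfolding \<sigma>_def by simp
      qed
      show "(-1::real) ^ \<sigma> k = - ((-1) ^ k)" using F(5,6)[OF ks] unfolding \<sigma>_def by simp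
    qed (rule finite_subset[of _ "{..<s}"], auto)
  next
    fix j
    define \<sigma> where "\<sigma> k = (if R k then pr k else Suc k mod s)" for k
    show "sum x {c\<in>T. snd c = j} = 0"
      unfolding key
    proof (rule inv_sum_zero[where \<sigma>=\<sigma>])
      fix k assume k: "k \<in> {k. k < s \<and> snd (v k) = j}"
      then have ks: "k < s" by simp
      show "\<sigma> k \<in> {k. k < s \<and> snd (v k) = j}"
      proof (cases "R k")
        case False then show ?thesis using k F(1)[OF ks] Rnot[OF ks] unfolding \<sigma>_def by simp
      next
        case True then have "\<not> R (pr k)" using Rpr[OF ks] by simp
        then have "snd (v (pr k)) = snd (v (Suc (pr k) mod s))" using Rnot[OF F(2)[OF ks]] by blast
        then have "snd (v (pr k)) = snd (v k)" using F(3)[OF ks] by metis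
        moreover have "\<sigma> k = pr k" using True unfolding \<sigma>_def by simp
        ultimately show ?thesis using k F(2)[OF ks] by simp
      qed
      show "\<sigma> (\<sigma> k) = k"
      proof (cases "R k")
        case False then have "R (Suc k mod s)" using Ralt[OF ks] by simp
        then show ?thesis using False F(4)[OF ks] unfolding \<sigma>_def by simp
      next
        case True then have "\<not> R (pr k)" using Rpr[OF ks] by simp
        then show ?thesis using True F(3)[OF ks] unfolding \<sigma>_def by simp
      qed
      show "(-1::real) ^ \<sigma> k = - ((-1) ^ k)" using F(5,6)[OF ks] unfolding \<sigma>_def by simp
    qed (rule finite_subset[of _ "{..<s}"], auto)
  qed
  moreover have "v 0 \<in> T" "x (v 0) \<noteq> 0" using vT xv[of 0] s4 by auto
  ultimately show ?thesis unfolding indep_def by (meson spec)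
qed


lemma indep_insert_leaf:
  assumes fin: "finite G" and nl: "l \<notin> G" and ind: "indep G"
    and leaf: "(\<forall>d\<in>G. fst d \<noteq> fst l) \<or> (\<forall>d\<in>G. snd d \<noteq> snd l)"
  shows "indep (insert l G)"
  unfolding indep_def
proof (intro allI impI)
  fix x assume z: "zm (insert l G) x"
  have xl: "x l = 0"
  proof (cases "\<forall>d\<in>G. fst d \<noteq> fst l")
    case True
    then have "{c \<in> insert l G. fst c = fst l} = {l}" by auto
    moreover have "sum x {c \<in> insert l G. fst c = fst l} = 0" using z unfolding zm_def by blast
    ultimately show ?thesis by simp
  next
    case False then have "{c \<in> insert l G. snd c = snd l} = {l}" using leaf by auto
    moreover have "sum x {c \<in> insert l G. snd c = snd l} = 0" using z unfolding zm_def by blast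
    ultimately show ?thesis by simp
  qed
  have split: "sum x {c \<in> insert l G. P c} = sum x {c\<in>G. P c}" for P
  proof (cases "P l")
    case True then have "{c \<in> insert l G. P c} = insert l {c\<in>G. P c}" by auto
    then show ?thesis using fin nl xl by simp
  next
    case False then have "{c \<in> insert l G. P c} = {c\<in>G. P c}" by auto
    then show ?thesis by simp
  qed
  have "zm G x" using z unfolding zm_def split by blast
  then have "\<forall>c\<in>G. x c = 0" using ind unfolding indep_def by (meson spec)
  then show "\<forall>c\<in>insert l G. x c = 0" using xl by simp
qed

lemma indep_empty: "indep {}" by (simp add: indep_def)

lemma leaf_exists:
  assumes "finite F" "F \<noteq> {}" "\<not> has_circuit F"
  shows "\<exists>l\<in>F. (\<forall>d\<in>F-{l}. fst d \<noteq> fst l) \<or> (\<forall>d\<in>F-{l}. snd d \<noteq> snd l)"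
proof (rule ccontr)
  assume "\<not> ?thesis"
  then have "\<And>c. c\<in>F \<Longrightarrow> \<exists>d\<in>F. d \<noteq> c \<and> fst d = fst c"
      "\<And>c. c\<in>F \<Longrightarrow> \<exists>d\<in>F. d \<noteq> c \<and> snd d = snd c" by auto
  then have "has_circuit F" using no_leaf_circuit[OF assms(1,2)] by blast
  then show False using assms(3) by blast
qed

lemma nocirc_indep: "finite F \<Longrightarrow> \<not> has_circuit F \<Longrightarrow> indep F"
proof (induction "card F" arbitrary: F rule: less_induct)
  case less
  show ?case
  proof (cases "F = {}")
    case True then show ?thesis by (simp add: indep_empty)
  next
    case False
    obtain l where l: "l \<in> F" "(\<forall>d\<in>F-{l}. fst d \<noteq> fst l) \<or> (\<forall>d\<in>F-{l}. snd d \<noteq> snd l)"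
      using leaf_exists[OF less.prems(1) False less.prems(2)] by blast
    have "card (F - {l}) < card F" using l(1) less.prems(1) by (rule card_Diff1_less[rotated])
    moreover have "\<not> has_circuit (F - {l})" using less.prems(2) has_circuit_mono by blast
    ultimately have "indep (F - {l})" using less.hyps less.prems(1) by blast
    then have "indep (insert l (F - {l}))"
      by (rule indep_insert_leaf[rotated 2]) (use l less.prems(1) in auto)
    then show ?thesis using l by (simp add: insert_absorb)
  qed
qed

lemma indep_nocirc: "finite F \<Longrightarrow> indep F \<Longrightarrow> \<not> has_circuit F"
  using circuit_dep by blast

lemma indep_mono: "finite F \<Longrightarrow> indep F \<Longrightarrow> G \<subseteq> F \<Longrightarrow> indep G"
  by (meson finite_subset has_circuit_mono indep_nocirc nocirc_indep)

lemma indep_card: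
  "finite F \<Longrightarrow> F \<noteq> {} \<Longrightarrow> indep F \<Longrightarrow> card F + 1 \<le> card (fst ` F) + card (snd ` F)"
proof (induction "card F" arbitrary: F rule: less_induct)
  case less
  obtain l where l: "l \<in> F" "(\<forall>d\<in>F-{l}. fst d \<noteq> fst l) \<or> (\<forall>d\<in>F-{l}. snd d \<noteq> snd l)"
    using leaf_exists[OF less.prems(1,2) indep_nocirc[OF less.prems(1,3)]] by blast
  define G where "G = F - {l}"
  show ?case
  proof (cases "G = {}")
    case True then have "F = {l}" using l by (auto simp: G_def)
    then show ?thesis by simp
  next
    case False
    have finG: "finite G" using less.prems(1) by (simp add: G_def)
    have indG: "indep G" using indep_mono[OF less.prems(1,3)] by (simp add: G_def)
    have c0: "card F > 0" using l(1) less.prems(1) card_gt_0_iff by blast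
    have lt: "card G < card F" using l(1) less.prems(1) c0 by (simp add: G_def)
    have IH: "card G + 1 \<le> card (fst ` G) + card (snd ` G)" using less.hyps[OF lt finG False indG] .
    have cF: "card F = card G + 1" using l(1) less.prems(1) c0 by (simp add: G_def)
    have f1: "card (fst ` F) \<ge> 1" "card (snd ` F) \<ge> 1" using l(1) less.prems(1)
      by (auto simp: Suc_le_eq card_gt_0_iff)
    from l(2) show ?thesis
    proof
      assume r: "\<forall>d\<in>F-{l}. fst d \<noteq> fst l"
      have "fst ` G = fst ` F - {fst l}" using r l(1) by (auto simp: G_def image_iff)
      then have "card (fst ` G) = card (fst ` F) - 1" using l(1) less.prems(1) by simp
      moreover have "card (snd ` G) \<le> card (snd ` F)"
        by (rule card_mono) (auto simp: G_def less.prems(1))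
      ultimately show ?thesis using IH cF f1 by linarith
    next
      assume r: "\<forall>d\<in>F-{l}. snd d \<noteq> snd l"
      have "snd ` G = snd ` F - {snd l}" using r l(1) by (auto simp: G_def image_iff)
      then have "card (snd ` G) = card (snd ` F) - 1" using l(1) less.prems(1) by simp
      moreover have "card (fst ` G) \<le> card (fst ` F)"
        by (rule card_mono) (auto simp: G_def less.prems(1))
      ultimately show ?thesis using IH cF f1 by linarith
    qed
  qed
qed


lemma indep_connected:
  assumes sub: "F \<subseteq> {1..m} \<times> {1..n}" and ind: "indep F" and cF: "card F = m + n - 1"
    and m: "1 \<le> m" and n: "1 \<le> n"
  shows "connected_set F"
  unfolding connected_set_def
proof (intro ballI, rule ccontr)
  fix u v assume u: "u \<in> F" and v: "v \<in> F"
  define E where "E = (\<lambda>a b. a \<in> F \<and> b \<in> F \<and> adjacent a b)"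
  assume nr: "\<not> (\<lambda>a b. a \<in> F \<and> b \<in> F \<and> adjacent a b)\<^sup>*\<^sup>* u v"
  define F1 where "F1 = {w\<in>F. E\<^sup>*\<^sup>* u w}"
  define F2 where "F2 = F - F1"
  have fin: "finite F" using sub finite_subset by blast
  have u1: "u \<in> F1" using u by (simp add: F1_def)
  have v2: "v \<in> F2" using v nr by (simp add: F1_def F2_def E_def)
  have reach: "E a b" if "a \<in> F1" "b \<in> F2" "fst a = fst b \<or> snd a = snd b" for a b
  proof -
    have "a \<noteq> b" using that by (auto simp: F2_def)
    then show ?thesis using that unfolding E_def adjacent_def F1_def F2_def by auto
  qed
  have step: False if "a \<in> F1" "b \<in> F2" "fst a = fst b \<or> snd a = snd b" for a b
  proof -
    have "E a b" using reach that by blast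
    then have "E\<^sup>*\<^sup>* u b" using that(1) by (auto simp: F1_def intro: rtranclp.rtrancl_into_rtrancl)
    then show False using that(2) by (auto simp: F1_def F2_def)
  qed
  have dr: "fst ` F1 \<inter> fst ` F2 = {}" using step by fastforce
  have dc: "snd ` F1 \<inter> snd ` F2 = {}" using step by fastforce
  have f1: "finite F1" "finite F2" using fin by (auto simp: F1_def F2_def)
  have s12: "F1 \<subseteq> F" "F2 \<subseteq> F" by (auto simp: F1_def F2_def)
  have c1: "card F1 + 1 \<le> card (fst ` F1) + card (snd ` F1)"
    using indep_card[OF f1(1) _ indep_mono[OF fin ind s12(1)]] u1 by blast
  have c2: "card F2 + 1 \<le> card (fst ` F2) + card (snd ` F2)"
    using indep_card[OF f1(2) _ indep_mono[OF fin ind s12(2)]] v2 by blast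
  have "F = F1 \<union> F2" "F1 \<inter> F2 = {}" by (auto simp: F1_def F2_def)
  then have cU: "card F = card F1 + card F2" using f1 card_Un_disjoint by metis
  have "card (fst ` F1) + card (fst ` F2) = card (fst ` F1 \<union> fst ` F2)"
    using dr f1 by (simp add: card_Un_disjoint)
  also have "\<dots> = card (fst ` F)" using \<open>F = F1 \<union> F2\<close> by (simp add: image_Un)
  also have "\<dots> \<le> card {1..m}" by (rule card_mono) (use sub in auto)
  finally have r: "card (fst ` F1) + card (fst ` F2) \<le> m" by simp
  have "card (snd ` F1) + card (snd ` F2) = card (snd ` F1 \<union> snd ` F2)"
    using dc f1 by (simp add: card_Un_disjoint)
  also have "\<dots> = card (snd ` F)" using \<open>F = F1 \<union> F2\<close> by (simp add: image_Un)
  also have "\<dots> \<le> card {1..n}" by (rule card_mono) (use sub in auto)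
  finally have c: "card (snd ` F1) + card (snd ` F2) \<le> n" by simp
  show False using c1 c2 cU r c cF m n by linarith
qed

definition hook :: "nat set \<Rightarrow> nat set \<Rightarrow> nat \<Rightarrow> nat \<Rightarrow> (nat \<times> nat) set" where
  "hook R C r0 c0 = {r0} \<times> C \<union> R \<times> {c0}"

lemma hook_props:
  assumes fR: "finite R" and fC: "finite C" and r0: "r0 \<in> R" and c0: "c0 \<in> C"
  shows "hook R C r0 c0 \<subseteq> R \<times> C" "indep (hook R C r0 c0)"
    "card (hook R C r0 c0) = card R + card C - 1"
proof -
  show "hook R C r0 c0 \<subseteq> R \<times> C" using r0 c0 by (auto simp: hook_def)
  let ?H = "hook R C r0 c0"
  show "indep ?H" unfolding indep_def
  proof (intro allI impI)
    fix x assume z: "zm ?H x"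
    have a: "x (r, c0) = 0" if "r \<noteq> r0" "r \<in> R" for r
    proof -
      have "{d\<in>?H. fst d = r} = {(r, c0)}" using that c0 by (auto simp: hook_def)
      moreover have "sum x {d\<in>?H. fst d = r} = 0" using z unfolding zm_def by blast
      ultimately show ?thesis by simp
    qed
    have b: "x (r0, c) = 0" if "c \<noteq> c0" "c \<in> C" for c
    proof -
      have "{d\<in>?H. snd d = c} = {(r0, c)}" using that r0 by (auto simp: hook_def)
      moreover have "sum x {d\<in>?H. snd d = c} = 0" using z unfolding zm_def by blast
      ultimately show ?thesis by simp
    qed
    have e: "{d\<in>?H. fst d = r0} = {r0} \<times> C" using c0 by (auto simp: hook_def)
    have "sum x ({r0} \<times> C) = x (r0, c0) + sum x ({r0} \<times> C - {(r0, c0)})"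
      using fC c0 by (simp add: sum.remove)
    also have "sum x ({r0} \<times> C - {(r0, c0)}) = 0" by (rule sum.neutral) (auto intro: b)
    finally have "x (r0, c0) = sum x {d\<in>?H. fst d = r0}" using e by simp
    also have "\<dots> = 0" using z unfolding zm_def by blast
    finally have x0: "x (r0, c0) = 0" .
    show "\<forall>c\<in>?H. x c = 0" unfolding hook_def
    proof
      fix d assume "d \<in> {r0} \<times> C \<union> R \<times> {c0}"
      then consider c where "d = (r0,c)" "c \<in> C" | r where "d = (r,c0)" "r \<in> R" by blast
      then show "x d = 0"
      proof cases
        case 1 then show ?thesis using b x0 by (cases "c = c0") auto
      next
        case 2 then show ?thesis using a x0 by (cases "r = r0") auto
      qed
    qed
  qed
  have "card ({r0} \<times> C) + card (R \<times> {c0}) = card ?H + card ({r0} \<times> C \<inter> R \<times> {c0})"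
    unfolding hook_def by (rule card_Un_Int) (use fR fC in auto)
  moreover have "{r0} \<times> C \<inter> R \<times> {c0} = {(r0, c0)}" using r0 c0 by auto
  moreover have "card ({r0} \<times> C) = card C" "card (R \<times> {c0}) = card R"
    by (simp_all add: card_cartesian_product)
  ultimately show "card ?H = card R + card C - 1" by simp
qed

lemma extend_indep:
  "finite R \<Longrightarrow> finite C \<Longrightarrow> R \<noteq> {} \<Longrightarrow> C \<noteq> {} \<Longrightarrow> F \<subseteq> R \<times> C \<Longrightarrow> indep F \<Longrightarrow>
   \<exists>T. F \<subseteq> T \<and> T \<subseteq> R \<times> C \<and> indep T \<and> card T = card R + card C - 1"
proof (induction "card R + card C" arbitrary: R C F rule: less_induct)
  case less
  have finF: "finite F" using less.prems(1,2,5) finite_subset by blast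
  obtain r0 c0 where r0: "r0 \<in> R" and c0: "c0 \<in> C" using less.prems(3,4) by blast
  show ?case
  proof (cases "F = {}")
    case True
    show ?thesis using hook_props[OF less.prems(1,2) r0 c0] True by blast
  next
    case False
    obtain l where l: "l \<in> F" "(\<forall>d\<in>F-{l}. fst d \<noteq> fst l) \<or> (\<forall>d\<in>F-{l}. snd d \<noteq> snd l)"
      using leaf_exists[OF finF False indep_nocirc[OF finF less.prems(6)]] by blast
    have indF': "indep (F - {l})" using indep_mono[OF finF less.prems(6)] by blast
    have finF': "finite (F - {l})" using finF by simp
    from l(2) show ?thesis
    proof
      assume r: "\<forall>d\<in>F-{l}. fst d \<noteq> fst l"
      define i where "i = fst l"
      have iR: "i \<in> R" using l(1) less.prems(5) by (auto simp: i_def)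
      show ?thesis
      proof (cases "R = {i}")
        case True
        have "F \<subseteq> hook R C i c0" using less.prems(5) True by (auto simp: hook_def)
        then show ?thesis using hook_props[OF less.prems(1,2) iR c0] by blast
      next
        case False
        define R' where "R' = R - {i}"
        have R'ne: "R' \<noteq> {}" using False iR by (auto simp: R'_def)
        have fR': "finite R'" using less.prems(1) by (simp add: R'_def)
        have cR: "card R' = card R - 1" using iR less.prems(1) by (simp add: R'_def)
        have cR1: "card R \<ge> 1" using iR less.prems(1) by (auto simp: Suc_le_eq card_gt_0_iff)
        have cR2: "card R' \<ge> 1" using R'ne fR' by (auto simp: Suc_le_eq card_gt_0_iff)
        have cC1: "card C \<ge> 1" using c0 less.prems(2) by (auto simp: Suc_le_eq card_gt_0_iff)
        have sub': "F - {l} \<subseteq> R' \<times> C"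
        proof
          fix d assume "d \<in> F - {l}"
          then have "fst d \<noteq> i" "d \<in> R \<times> C" using r less.prems(5) i_def by auto
          then show "d \<in> R' \<times> C" by (cases d) (auto simp: R'_def)
        qed
        have lt: "card R' + card C < card R + card C" using cR cR1 by linarith
        obtain T' where T': "F - {l} \<subseteq> T'" "T' \<subseteq> R' \<times> C" "indep T'" "card T' = card R' + card C - 1"
          using less.hyps[OF lt fR' less.prems(2) R'ne less.prems(4) sub' indF'] by blast
        have fT': "finite T'" using T'(2) fR' less.prems(2) finite_subset by blast
        have lT': "l \<notin> T'" using T'(2) by (auto simp: R'_def i_def)
        have leafT: "\<forall>d\<in>T'. fst d \<noteq> fst l" using T'(2) by (auto simp: R'_def i_def)
        have "indep (insert l T')" using indep_insert_leaf[OF fT' lT' T'(3)] leafT by blast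
        moreover have "F \<subseteq> insert l T'" using T'(1) by blast
        moreover have "insert l T' \<subseteq> R \<times> C" using T'(2) l(1) less.prems(5) by (auto simp: R'_def)
        moreover have "card (insert l T') = card R + card C - 1"
          using T'(4) fT' lT' cR cR1 cR2 cC1 by simp
        ultimately show ?thesis by blast
      qed
    next
      assume r: "\<forall>d\<in>F-{l}. snd d \<noteq> snd l"
      define j where "j = snd l"
      have jC: "j \<in> C" using l(1) less.prems(5) by (auto simp: j_def)
      show ?thesis
      proof (cases "C = {j}")
        case True
        have "F \<subseteq> hook R C r0 j" using less.prems(5) True by (auto simp: hook_def)
        then show ?thesis using hook_props[OF less.prems(1,2) r0 jC] by blast
      next
        case False
        define C' where "C' = C - {j}"
        have C'ne: "C' \<noteq> {}" using False jC by (auto simp: C'_def)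
        have fC': "finite C'" using less.prems(2) by (simp add: C'_def)
        have cC: "card C' = card C - 1" using jC less.prems(2) by (simp add: C'_def)
        have cC1: "card C \<ge> 1" using jC less.prems(2) by (auto simp: Suc_le_eq card_gt_0_iff)
        have cC2: "card C' \<ge> 1" using C'ne fC' by (auto simp: Suc_le_eq card_gt_0_iff)
        have cR1: "card R \<ge> 1" using r0 less.prems(1) by (auto simp: Suc_le_eq card_gt_0_iff)
        have sub': "F - {l} \<subseteq> R \<times> C'"
        proof
          fix d assume "d \<in> F - {l}"
          then have "snd d \<noteq> j" "d \<in> R \<times> C" using r less.prems(5) j_def by auto
          then show "d \<in> R \<times> C'" by (cases d) (auto simp: C'_def)
        qed
        have lt: "card R + card C' < card R + card C" using cC cC1 by linarith
        obtain T' where T': "F - {l} \<subseteq> T'" "T' \<subseteq> R \<times> C'" "indep T'" "card T' = card R + card C' - 1"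
          using less.hyps[OF lt less.prems(1) fC' less.prems(3) C'ne sub' indF'] by blast
        have fT': "finite T'" using T'(2) fC' less.prems(1) finite_subset by blast
        have lT': "l \<notin> T'" using T'(2) by (auto simp: C'_def j_def)
        have leafT: "\<forall>d\<in>T'. snd d \<noteq> snd l" using T'(2) by (auto simp: C'_def j_def)
        have "indep (insert l T')" using indep_insert_leaf[OF fT' lT' T'(3)] leafT by blast
        moreover have "F \<subseteq> insert l T'" using T'(1) by blast
        moreover have "insert l T' \<subseteq> R \<times> C" using T'(2) l(1) less.prems(5) by (auto simp: C'_def)
        moreover have "card (insert l T') = card R + card C - 1"
          using T'(4) fT' lT' cC cC1 cC2 cR1 by simp
        ultimately show ?thesis by blast
      qed
    qed
  qed
qed

definition cf :: "rmat \<Rightarrow> nat \<times> nat \<Rightarrow> real" where "cf P c = P (fst c) (snd c)"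

lemma supp_coupling: "P \<in> coupling m n p q \<Longrightarrow> support P \<subseteq> {1..m} \<times> {1..n}"
proof
  fix c assume P: "P \<in> coupling m n p q" and c: "c \<in> support P"
  obtain i j where ij: "c = (i, j)" by (cases c)
  have "P i j \<noteq> 0" using c ij by (simp add: support_def)
  moreover have "\<forall>i j. P i j \<noteq> 0 \<longrightarrow> i \<in> {1..m} \<and> j \<in> {1..n}" using P by (simp add: coupling_def)
  ultimately show "c \<in> {1..m} \<times> {1..n}" using ij by blast
qed

lemma finite_supp_coupling: "P \<in> coupling m n p q \<Longrightarrow> finite (support P)"
  by (rule finite_subset[OF supp_coupling]) auto

lemma row_conv:
  assumes F: "F \<subseteq> {1..m} \<times> {1..n}" and s: "support P \<subseteq> F"
  shows "(\<Sum>j=1..n. P i j) = sum (cf P) {c\<in>F. fst c = i}"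
proof -
  have "sum (cf P) (Pair i ` {1..n}) = sum (cf P \<circ> Pair i) {1..n}"
    by (rule sum.reindex) (simp add: inj_on_def)
  then have "(\<Sum>j=1..n. P i j) = sum (cf P) (Pair i ` {1..n})"
    by (simp add: cf_def o_def)
  also have "\<dots> = sum (cf P) {c\<in>F. fst c = i}"
  proof (rule sum.mono_neutral_right)
    show "finite (Pair i ` {1..n})" by simp
    show "{c\<in>F. fst c = i} \<subseteq> Pair i ` {1..n}"
    proof
      fix c assume c: "c \<in> {c\<in>F. fst c = i}"
      then have "snd c \<in> {1..n}" using F by auto
      moreover have "c = Pair i (snd c)" using c by (cases c) auto
      ultimately show "c \<in> Pair i ` {1..n}" by blast
    qed
    show "\<forall>c\<in>Pair i ` {1..n} - {c\<in>F. fst c = i}. cf P c = 0"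
    proof
      fix c assume "c \<in> Pair i ` {1..n} - {c\<in>F. fst c = i}"
      then have "c \<notin> F" by auto
      then have "c \<notin> support P" using s by blast
      then show "cf P c = 0" by (cases c) (simp add: support_def cf_def)
    qed
  qed
  finally show ?thesis .
qed

lemma col_conv:
  assumes F: "F \<subseteq> {1..m} \<times> {1..n}" and s: "support P \<subseteq> F"
  shows "(\<Sum>i=1..m. P i j) = sum (cf P) {c\<in>F. snd c = j}"
proof -
  have "sum (cf P) ((\<lambda>i. (i, j)) ` {1..m}) = sum (cf P \<circ> (\<lambda>i. (i, j))) {1..m}"
    by (rule sum.reindex) (simp add: inj_on_def)
  then have "(\<Sum>i=1..m. P i j) = sum (cf P) ((\<lambda>i. (i, j)) ` {1..m})"
    by (simp add: cf_def o_def)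
  also have "\<dots> = sum (cf P) {c\<in>F. snd c = j}"
  proof (rule sum.mono_neutral_right)
    show "finite ((\<lambda>i. (i, j)) ` {1..m})" by simp
    show "{c\<in>F. snd c = j} \<subseteq> (\<lambda>i. (i, j)) ` {1..m}"
    proof
      fix c assume c: "c \<in> {c\<in>F. snd c = j}"
      then have "fst c \<in> {1..m}" using F by auto
      moreover have "c = (fst c, j)" using c by (cases c) auto
      ultimately show "c \<in> (\<lambda>i. (i, j)) ` {1..m}" by blast
    qed
    show "\<forall>c\<in>(\<lambda>i. (i, j)) ` {1..m} - {c\<in>F. snd c = j}. cf P c = 0"
    proof
      fix c assume "c \<in> (\<lambda>i. (i, j)) ` {1..m} - {c\<in>F. snd c = j}"
      then have "c \<notin> F" by auto
      then have "c \<notin> support P" using s by blast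
      then show "cf P c = 0" by (cases c) (simp add: support_def cf_def)
    qed
  qed
  finally show ?thesis .
qed

lemma margins_zm:
  assumes P: "P \<in> coupling m n p q" and Q: "Q \<in> coupling m n p q"
    and F: "F \<subseteq> {1..m} \<times> {1..n}" and sP: "support P \<subseteq> F" and sQ: "support Q \<subseteq> F"
  shows "zm F (\<lambda>c. cf P c - cf Q c)"
  unfolding zm_def
proof (intro conjI allI)
  fix i
  have fin: "finite F" by (rule finite_subset[OF F]) auto
  show "(\<Sum>c\<in>{c\<in>F. fst c = i}. cf P c - cf Q c) = 0"
  proof (cases "i \<in> {1..m}")
    case True
    have "(\<Sum>c\<in>{c\<in>F. fst c = i}. cf P c - cf Q c) = (\<Sum>j=1..n. P i j) - (\<Sum>j=1..n. Q i j)"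
      using row_conv[OF F sP] row_conv[OF F sQ] fin by (simp add: sum_subtractf)
    also have "\<dots> = 0" using P Q True unfolding coupling_def by simp
    finally show ?thesis .
  next
    case False then have e: "{c\<in>F. fst c = i} = {}" using F by auto
    show ?thesis by (simp only: e sum.empty)
  qed
next
  fix j
  have fin: "finite F" by (rule finite_subset[OF F]) auto
  show "(\<Sum>c\<in>{c\<in>F. snd c = j}. cf P c - cf Q c) = 0"
  proof (cases "j \<in> {1..n}")
    case True
    have "(\<Sum>c\<in>{c\<in>F. snd c = j}. cf P c - cf Q c) = (\<Sum>i=1..m. P i j) - (\<Sum>i=1..m. Q i j)"
      using col_conv[OF F sP] col_conv[OF F sQ] fin by (simp add: sum_subtractf)
    also have "\<dots> = 0" using P Q True unfolding coupling_def by simp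
    finally show ?thesis .
  next
    case False then have e: "{c\<in>F. snd c = j} = {}" using F by auto
    show ?thesis by (simp only: e sum.empty)
  qed
qed

lemma comb_coupling:
  assumes P: "P \<in> coupling m n p q" and sD: "support D \<subseteq> {1..m} \<times> {1..n}"
    and rD: "\<And>i. i \<in> {1..m} \<Longrightarrow> (\<Sum>j=1..n. D i j) = 0"
    and cD: "\<And>j. j \<in> {1..n} \<Longrightarrow> (\<Sum>i=1..m. D i j) = 0"
    and nn: "\<And>i j. 0 \<le> P i j + t * D i j"
  shows "(\<lambda>i j. P i j + t * D i j) \<in> coupling m n p q"
proof -
  have a: "\<forall>i j. P i j + t * D i j \<noteq> 0 \<longrightarrow> i \<in> {1..m} \<and> j \<in> {1..n}"
  proof (intro allI impI)
    fix i j assume "P i j + t * D i j \<noteq> 0"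
    then have "P i j \<noteq> 0 \<or> D i j \<noteq> 0" by auto
    then show "i \<in> {1..m} \<and> j \<in> {1..n}" using P sD unfolding coupling_def support_def by auto
  qed
  have c: "\<forall>i\<in>{1..m}. (\<Sum>j = 1..n. P i j + t * D i j) = p i"
  proof
    fix i assume i: "i \<in> {1..m}"
    show "(\<Sum>j = 1..n. P i j + t * D i j) = p i"
      using P rD[OF i] i unfolding coupling_def by (simp add: sum.distrib sum_distrib_left[symmetric])
  qed
  have d: "\<forall>j\<in>{1..n}. (\<Sum>i = 1..m. P i j + t * D i j) = q j"
  proof
    fix j assume j: "j \<in> {1..n}"
    show "(\<Sum>i = 1..m. P i j + t * D i j) = q j"
      using P cD[OF j] j unfolding coupling_def by (simp add: sum.distrib sum_distrib_left[symmetric])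
  qed
  have b: "\<forall>i j. 0 \<le> P i j + t * D i j" using nn by blast
  show ?thesis unfolding coupling_def mem_Collect_eq using a b c d by (intro conjI)
qed

lemma sign_both:
  fixes f :: "'a \<Rightarrow> real"
  assumes fin: "finite A" and s0: "sum f A = 0" and c: "c \<in> A" and fc: "f c \<noteq> 0"
  shows "(\<exists>a\<in>A. f a > 0) \<and> (\<exists>a\<in>A. f a < 0)"
proof (intro conjI)
  show "\<exists>a\<in>A. f a > 0"
  proof (rule ccontr)
    assume "\<not> ?thesis"
    then have nn: "\<forall>a\<in>A. 0 \<le> - f a" by (auto simp: not_less)
    have e: "(sum (\<lambda>a. - f a) A = 0) = (\<forall>x\<in>A. - f x = 0)"
      by (rule sum_nonneg_eq_0_iff[OF fin]) (use nn in auto)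
    have "sum (\<lambda>a. - f a) A = 0" using s0 by (simp add: sum_negf)
    then have "- f c = 0" using e c by blast
    then show False using fc by simp
  qed
  show "\<exists>a\<in>A. f a < 0"
  proof (rule ccontr)
    assume "\<not> ?thesis"
    then have nn: "\<forall>a\<in>A. 0 \<le> f a" by (auto simp: not_less)
    have e: "(sum f A = 0) = (\<forall>x\<in>A. f x = 0)"
      by (rule sum_nonneg_eq_0_iff[OF fin]) (use nn in auto)
    then have "f c = 0" using s0 c by blast
    then show False using fc by simp
  qed
qed

lemma decompose:
  assumes P: "P \<in> coupling m n p q" and ni: "\<not> indep (support P)"
  shows "\<exists>Q R t. Q \<in> coupling m n p q \<and> R \<in> coupling m n p q \<and> Q \<noteq> R \<and> 0 < t \<and> t < 1 \<and>
     P = (\<lambda>i j. t * Q i j + (1 - t) * R i j) \<and>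
     card (support Q) < card (support P) \<and> card (support R) < card (support P)"
proof -
  define S where "S = support P"
  have Ssub: "S \<subseteq> {1..m} \<times> {1..n}" using supp_coupling[OF P] by (simp add: S_def)
  have finS: "finite S" using finite_supp_coupling[OF P] by (simp add: S_def)
  obtain x c0 where zx: "zm S x" and c0S: "c0 \<in> S" and xc0: "x c0 \<noteq> 0"
    using ni unfolding indep_def S_def by blast
  have Pnn: "0 \<le> P i j" for i j using P unfolding coupling_def by blast
  have Ppos: "cf P c > 0" if "c \<in> S" for c
    using that Pnn[of "fst c" "snd c"] by (cases c) (auto simp: S_def support_def cf_def)
  have Pz: "P i j = 0" if "(i, j) \<notin> S" for i j using that by (simp add: S_def support_def)
  define D where "D i j = (if (i,j) \<in> S then x (i,j) else 0)" for i j
  have sD: "support D \<subseteq> S" by (auto simp: support_def D_def)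
  have cfD: "cf D c = (if c \<in> S then x c else 0)" for c by (cases c) (simp add: cf_def D_def)
  have rD: "(\<Sum>j=1..n. D i j) = 0" for i
  proof -
    have "(\<Sum>j=1..n. D i j) = sum (cf D) {c\<in>S. fst c = i}" by (rule row_conv[OF Ssub sD])
    also have "\<dots> = sum x {c\<in>S. fst c = i}" by (rule sum.cong) (auto simp: cfD)
    also have "\<dots> = 0" using zx unfolding zm_def by blast
    finally show ?thesis .
  qed
  have cD: "(\<Sum>i=1..m. D i j) = 0" for j
  proof -
    have "(\<Sum>i=1..m. D i j) = sum (cf D) {c\<in>S. snd c = j}" by (rule col_conv[OF Ssub sD])
    also have "\<dots> = sum x {c\<in>S. snd c = j}" by (rule sum.cong) (auto simp: cfD)
    also have "\<dots> = 0" using zx unfolding zm_def by blast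
    finally show ?thesis .
  qed
  define Neg where "Neg = {c\<in>S. x c < 0}"
  define Pos where "Pos = {c\<in>S. x c > 0}"
  have "(\<exists>a\<in>{c\<in>S. fst c = fst c0}. x a > 0) \<and> (\<exists>a\<in>{c\<in>S. fst c = fst c0}. x a < 0)"
    by (rule sign_both) (use finS zx c0S xc0 in \<open>auto simp: zm_def\<close>)
  then have neN: "Neg \<noteq> {}" and neP: "Pos \<noteq> {}" by (auto simp: Neg_def Pos_def)
  have finN: "finite Neg" and finP: "finite Pos" using finS by (auto simp: Neg_def Pos_def)
  define t1 where "t1 = Min ((\<lambda>c. cf P c / (- x c)) ` Neg)"
  define t2 where "t2 = Min ((\<lambda>c. cf P c / x c) ` Pos)"
  have "t1 \<in> (\<lambda>c. cf P c / (- x c)) ` Neg" unfolding t1_def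
    by (rule Min_in) (use finN neN in auto)
  then obtain c1 where c1: "c1 \<in> Neg" "t1 = cf P c1 / (- x c1)" by blast
  have "t2 \<in> (\<lambda>c. cf P c / x c) ` Pos" unfolding t2_def
    by (rule Min_in) (use finP neP in auto)
  then obtain c2 where c2: "c2 \<in> Pos" "t2 = cf P c2 / x c2" by blast
  have t1le: "t1 \<le> cf P c / (- x c)" if "c \<in> Neg" for c
    unfolding t1_def using finN that by (auto intro: Min_le)
  have t2le: "t2 \<le> cf P c / x c" if "c \<in> Pos" for c
    unfolding t2_def using finP that by (auto intro: Min_le)
  have t1p: "t1 > 0" using c1 Ppos[of c1] by (auto simp: Neg_def divide_pos_neg)
  have t2p: "t2 > 0" using c2 Ppos[of c2] by (auto simp: Pos_def)
  have nnQ: "0 \<le> P i j + t1 * D i j" for i j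
  proof (cases "(i,j) \<in> S \<and> x (i,j) < 0")
    case True
    then have N: "(i,j) \<in> Neg" by (simp add: Neg_def)
    have h: "t1 \<le> P i j / (- x (i,j))" using t1le[OF N] unfolding cf_def fst_conv snd_conv .
    have "0 < - x (i,j)" using True by simp
    from pos_le_divide_eq[OF this] h have "t1 * (- x (i,j)) \<le> P i j" by blast
    then show ?thesis using True by (simp add: D_def)
  next
    case False then show ?thesis using Pnn[of i j] t1p
      by (auto simp: D_def)
  qed
  have nnR: "0 \<le> P i j + (- t2) * D i j" for i j
  proof (cases "(i,j) \<in> S \<and> x (i,j) > 0")
    case True
    then have N: "(i,j) \<in> Pos" by (simp add: Pos_def)
    have h: "t2 \<le> P i j / x (i,j)" using t2le[OF N] unfolding cf_def fst_conv snd_conv .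
    have "0 < x (i,j)" using True by simp
    from pos_le_divide_eq[OF this] h have "t2 * x (i,j) \<le> P i j" by blast
    then show ?thesis using True by (simp add: D_def)
  next
    case False
    have "t2 * D i j \<le> 0"
    proof (cases "(i,j) \<in> S")
      case True
      then have "x (i,j) \<le> 0" using False by simp
      then show ?thesis using True t2p mult_nonneg_nonpos[of t2 "x (i,j)"] by (simp add: D_def)
    qed (simp add: D_def)
    then show ?thesis using Pnn[of i j] by simp
  qed
  have sDr: "support D \<subseteq> {1..m} \<times> {1..n}" using sD Ssub by blast
  define Q where "Q = (\<lambda>i j. P i j + t1 * D i j)"
  define R where "R = (\<lambda>i j. P i j + (- t2) * D i j)"
  have Qc: "Q \<in> coupling m n p q" unfolding Q_def
    by (rule comb_coupling[OF P sDr]) (use rD cD nnQ in auto)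
  have Rc: "R \<in> coupling m n p q" unfolding R_def
    by (rule comb_coupling[OF P sDr]) (use rD cD nnR in auto)
  have "Q (fst c0) (snd c0) - R (fst c0) (snd c0) = (t1 + t2) * x c0"
    using c0S by (simp add: Q_def R_def D_def algebra_simps)
  then have QR: "Q \<noteq> R" using xc0 t1p t2p by auto
  define t where "t = t2 / (t1 + t2)"
  have t0: "0 < t" "t < 1" using t1p t2p by (auto simp: t_def field_simps)
  have Peq: "P = (\<lambda>i j. t * Q i j + (1 - t) * R i j)"
  proof (intro ext)
    fix i j
    have "t * Q i j + (1 - t) * R i j = P i j + (t * t1 - (1 - t) * t2) * D i j"
      by (simp add: Q_def R_def algebra_simps)
    also have "t * t1 - (1 - t) * t2 = 0" using t1p t2p by (simp add: t_def field_simps)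
    finally show "P i j = t * Q i j + (1 - t) * R i j" by simp
  qed
  have c1S: "c1 \<in> S" "x c1 < 0" using c1 by (auto simp: Neg_def)
  have c2S: "c2 \<in> S" "x c2 > 0" using c2 by (auto simp: Pos_def)
  have "support Q \<subseteq> S - {c1}"
  proof
    fix c assume c: "c \<in> support Q"
    obtain i j where cij: "c = (i,j)" by (cases c)
    have "(i,j) \<in> S"
    proof (rule ccontr)
      assume "(i,j) \<notin> S"
      then have "Q i j = 0" using Pz[of i j] by (simp add: Q_def D_def)
      then show False using c unfolding cij by (simp add: support_def)
    qed
    moreover have "(i,j) \<noteq> c1"
    proof
      assume e: "(i,j) = c1"
      have "Q i j = cf P c1 + t1 * x c1" using c1S e by (auto simp: Q_def D_def cf_def)
      also have "\<dots> = 0" using c1 c1S by (simp add: field_simps)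
      finally show False using c unfolding cij by (simp add: support_def)
    qed
    ultimately show "c \<in> S - {c1}" using cij by simp
  qed
  then have "card (support Q) \<le> card (S - {c1})" using finS by (intro card_mono) auto
  also have "\<dots> < card S" using finS c1S(1) by (rule card_Diff1_less)
  finally have cQ: "card (support Q) < card S" .
  have "support R \<subseteq> S - {c2}"
  proof
    fix c assume c: "c \<in> support R"
    obtain i j where cij: "c = (i,j)" by (cases c)
    have "(i,j) \<in> S"
    proof (rule ccontr)
      assume "(i,j) \<notin> S"
      then have "R i j = 0" using Pz[of i j] by (simp add: R_def D_def)
      then show False using c unfolding cij by (simp add: support_def)
    qed
    moreover have "(i,j) \<noteq> c2"
    proof
      assume e: "(i,j) = c2"
      have "R i j = cf P c2 - t2 * x c2" using c2S e by (auto simp: R_def D_def cf_def)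
      also have "\<dots> = 0" using c2 c2S by (simp add: field_simps)
      finally show False using c unfolding cij by (simp add: support_def)
    qed
    ultimately show "c \<in> S - {c2}" using cij by simp
  qed
  then have "card (support R) \<le> card (S - {c2})" using finS by (intro card_mono) auto
  also have "\<dots> < card S" using finS c2S(1) by (rule card_Diff1_less)
  finally have cR: "card (support R) < card S" .
  show ?thesis using Qc Rc QR t0 Peq cQ cR unfolding S_def by blast
qed


lemma tree_of_indep:
  assumes m: "1 \<le> m" and n: "1 \<le> n" and T: "T \<subseteq> {1..m} \<times> {1..n}" and ind: "indep T"
    and cT: "card T = m + n - 1"
  shows "is_tree T"
proof -
  have fin: "finite T" by (rule finite_subset[OF T]) auto
  show ?thesis unfolding is_tree_def
    using indep_connected[OF T ind cT m n] indep_nocirc[OF fin ind] by blast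
qed

lemma indep_supp_tree:
  assumes m: "1 \<le> m" and n: "1 \<le> n" and P: "P \<in> coupling m n p q" and ind: "indep (support P)"
  shows "P \<in> tree_couplings m n p q"
proof -
  obtain T where T: "support P \<subseteq> T" "T \<subseteq> {1..m} \<times> {1..n}" "indep T"
      "card T = card {1..m} + card {1..n} - 1"
    using extend_indep[of "{1..m}" "{1..n}" "support P"] supp_coupling[OF P] ind m n by auto
  have cT: "card T = m + n - 1" using T(4) by simp
  have "is_tree T" by (rule tree_of_indep[OF m n T(2) T(3) cT])
  then show ?thesis unfolding tree_couplings_def using P T(1,2) cT by blast
qed

lemma extreme_sub_tree:
  assumes m: "1 \<le> m" and n: "1 \<le> n"
  shows "extreme_points (coupling m n p q) \<subseteq> tree_couplings m n p q"
proof
  fix P assume E: "P \<in> extreme_points (coupling m n p q)"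
  then have P: "P \<in> coupling m n p q" by (simp add: extreme_points_def)
  have "indep (support P)"
  proof (rule ccontr)
    assume "\<not> indep (support P)"
    from decompose[OF P this] obtain Q R t where "Q \<in> coupling m n p q" "R \<in> coupling m n p q"
      "Q \<noteq> R" "0 < t" "t < 1" "P = (\<lambda>i j. t * Q i j + (1 - t) * R i j)" by blast
    then show False using E unfolding extreme_points_def by blast
  qed
  then show "P \<in> tree_couplings m n p q" by (rule indep_supp_tree[OF m n P])
qed

lemma tree_sub_extreme:
  shows "tree_couplings m n p q \<subseteq> extreme_points (coupling m n p q)"
proof
  fix P assume PT: "P \<in> tree_couplings m n p q"
  then obtain T where P: "P \<in> coupling m n p q" and T: "T \<subseteq> {1..m} \<times> {1..n}" "is_tree T"
    "support P \<subseteq> T" unfolding tree_couplings_def by blast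
  have fin: "finite T" by (rule finite_subset[OF T(1)]) auto
  have ind: "indep T" using nocirc_indep[OF fin] T(2) by (simp add: is_tree_def)
  have "\<not> (\<exists>Q\<in>coupling m n p q. \<exists>R\<in>coupling m n p q. Q \<noteq> R \<and>
      (\<exists>t::real. 0 < t \<and> t < 1 \<and> P = (\<lambda>i j. t * Q i j + (1 - t) * R i j)))"
  proof
    assume "\<exists>Q\<in>coupling m n p q. \<exists>R\<in>coupling m n p q. Q \<noteq> R \<and>
      (\<exists>t::real. 0 < t \<and> t < 1 \<and> P = (\<lambda>i j. t * Q i j + (1 - t) * R i j))"
    then obtain Q R t where Q: "Q \<in> coupling m n p q" and R: "R \<in> coupling m n p q"
      and QR: "Q \<noteq> R" and t: "0 < t" "t < 1" and Pe: "P = (\<lambda>i j. t * Q i j + (1 - t) * R i j)"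
      by blast
    have Qnn: "0 \<le> Q i j" and Rnn: "0 \<le> R i j" for i j
      using Q R unfolding coupling_def by blast+
    have z: "Q i j = 0 \<and> R i j = 0" if "(i, j) \<notin> T" for i j
    proof -
      have "P i j = 0" using that T(3) by (auto simp: support_def)
      then have e: "t * Q i j + (1 - t) * R i j = 0" using Pe by metis
      have "0 \<le> t * Q i j" "0 \<le> (1 - t) * R i j" using Qnn[of i j] Rnn[of i j] t by auto
      then have "t * Q i j = 0" "(1 - t) * R i j = 0" using e by linarith+
      then show ?thesis using t by auto
    qed
    have sQ: "support Q \<subseteq> T" using z by (auto simp: support_def)
    have sR: "support R \<subseteq> T" using z by (auto simp: support_def)
    have "zm T (\<lambda>c. cf Q c - cf R c)" by (rule margins_zm[OF Q R T(1) sQ sR])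
    then have "\<forall>c\<in>T. cf Q c - cf R c = 0" using ind unfolding indep_def by (meson spec)
    then have "Q i j = R i j" for i j
      using z[of i j] by (cases "(i,j) \<in> T") (auto simp: cf_def)
    then have "Q = R" by (intro ext)
    then show False using QR by simp
  qed
  then show "P \<in> extreme_points (coupling m n p q)" using P unfolding extreme_points_def by blast
qed

lemma tree_below:
  assumes m: "1 \<le> m" and n: "1 \<le> n" and H: "strictly_concave_on (coupling m n p q) H"
  shows "P \<in> coupling m n p q \<Longrightarrow> \<exists>V\<in>tree_couplings m n p q. H V \<le> H P"
proof (induction "card (support P)" arbitrary: P rule: less_induct)
  case less
  show ?case
  proof (cases "indep (support P)")
    case True
    then have "P \<in> tree_couplings m n p q" by (rule indep_supp_tree[OF m n less.prems])
    then show ?thesis by blast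
  next
    case False
    from decompose[OF less.prems False] obtain Q R t where Q: "Q \<in> coupling m n p q"
      and R: "R \<in> coupling m n p q" and QR: "Q \<noteq> R" and t: "0 < t" "t < 1"
      and Pe: "P = (\<lambda>i j. t * Q i j + (1 - t) * R i j)"
      and cQ: "card (support Q) < card (support P)" and cR: "card (support R) < card (support P)"
      by blast
    obtain VQ where VQ: "VQ \<in> tree_couplings m n p q" "H VQ \<le> H Q" using less.hyps[OF cQ Q] by blast
    obtain VR where VR: "VR \<in> tree_couplings m n p q" "H VR \<le> H R" using less.hyps[OF cR R] by blast
    have "H P > t * H Q + (1 - t) * H R"
      using H Q R QR t unfolding strictly_concave_on_def Pe by blast
    moreover have "min (H Q) (H R) \<le> t * H Q + (1 - t) * H R"
    proof -
      have a: "t * min (H Q) (H R) \<le> t * H Q" using t by (intro mult_left_mono) auto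
      have b: "(1 - t) * min (H Q) (H R) \<le> (1 - t) * H R" using t by (intro mult_left_mono) auto
      have "min (H Q) (H R) = t * min (H Q) (H R) + (1 - t) * min (H Q) (H R)" by (simp add: algebra_simps)
      then show ?thesis using a b by linarith
    qed
    ultimately have "H P \<ge> min (H Q) (H R)" by linarith
    show ?thesis
    proof (cases "H Q \<le> H R")
      case True
      then have "H VQ \<le> H P" using VQ \<open>H P \<ge> min (H Q) (H R)\<close> by (simp add: min_def)
      then show ?thesis using VQ(1) by blast
    next
      case False
      then have "H VR \<le> H P" using VR \<open>H P \<ge> min (H Q) (H R)\<close> by (simp add: min_def)
      then show ?thesis using VR(1) by blast
    qed
  qed
qed

definition cellS :: "nat \<Rightarrow> nat set \<Rightarrow> nat \<Rightarrow> nat \<times> nat" where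
  "cellS n S k = phi n (elem S (Suc k))"

definition psi :: "nat \<Rightarrow> nat \<times> nat \<Rightarrow> nat" where
  "psi n c = (fst c - 1) * n + snd c"

lemma phi_range:
  assumes "1 \<le> n" "i \<in> {1..m * n}" shows "phi n i \<in> {1..m} \<times> {1..n}"
proof -
  have "i - 1 < m * n" using assms by auto
  then have "(i - 1) div n < m" by (rule less_mult_imp_div_less)
  moreover have "(i - 1) mod n < n" using assms by simp
  ultimately show ?thesis by (auto simp: phi_def)
qed

lemma phi_psi: assumes "c \<in> {1..m} \<times> {1..n}" shows "phi n (psi n c) = c"
proof -
  obtain t r where c: "c = (t, r)" "1 \<le> t" "t \<le> m" "1 \<le> r" "r \<le> n" using assms by auto
  have e: "psi n c - 1 = (t - 1) * n + (r - 1)" using c by (simp add: psi_def)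
  have dm: "(a * n + b) div n = a" "(a * n + b) mod n = b" if "b < n" for a b using that by simp_all
  have "r - 1 < n" using c by simp
  from dm[OF this, of "t - 1"] have "(psi n c - 1) div n = t - 1" "(psi n c - 1) mod n = r - 1"
    unfolding e by simp_all
  then show ?thesis using c by (simp add: phi_def)
qed

lemma psi_phi: assumes "1 \<le> n" "1 \<le> i" shows "psi n (phi n i) = i"
proof -
  have "(i - 1) div n * n + (i - 1) mod n = i - 1" by simp
  then show ?thesis using assms by (simp add: psi_def phi_def)
qed

lemma psi_range: assumes "c \<in> {1..m} \<times> {1..n}" shows "psi n c \<in> {1..m * n}"
proof -
  obtain t r where c: "c = (t, r)" "1 \<le> t" "t \<le> m" "1 \<le> r" "r \<le> n" using assms by auto
  have "(t - 1) * n + r \<le> (m - 1) * n + n" using c by (intro add_mono mult_right_mono) auto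
  also have "\<dots> = m * n" using c by (cases m) auto
  finally show ?thesis using c by (simp add: psi_def)
qed

lemma phi_inj: assumes "1 \<le> n" shows "inj_on (phi n) {1..}"
proof (rule inj_onI)
  fix x y assume "x \<in> {1..}" "y \<in> {1..}" "phi n x = phi n y"
  then have "psi n (phi n x) = psi n (phi n y)" "1 \<le> x" "1 \<le> y" by auto
  then show "x = y" using psi_phi[OF assms] by metis
qed

lemma elem_eq: "elem S (Suc k) = sorted_list_of_set S ! k"
  by (simp add: elem_def)

lemma elem_facts:
  assumes fin: "finite S"
  shows "k < card S \<Longrightarrow> elem S (Suc k) \<in> S"
    "inj_on (\<lambda>k. elem S (Suc k)) {..<card S}"
    "(\<lambda>k. elem S (Suc k)) ` {..<card S} = S"
proof -
  let ?l = "sorted_list_of_set S"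
  have len: "length ?l = card S" by simp
  have st: "set ?l = S" using fin by simp
  have ds: "distinct ?l" by simp
  show "elem S (Suc k) \<in> S" if "k < card S"
  proof -
    have "?l ! k \<in> set ?l" using that len by (intro nth_mem) simp
    then show ?thesis using st by (simp add: elem_eq)
  qed
  show "inj_on (\<lambda>k. elem S (Suc k)) {..<card S}"
  proof (rule inj_onI)
    fix x y assume "x \<in> {..<card S}" "y \<in> {..<card S}" "elem S (Suc x) = elem S (Suc y)"
    then show "x = y" using ds len nth_eq_iff_index_eq[of ?l x y] by (simp add: elem_eq)
  qed
  show "(\<lambda>k. elem S (Suc k)) ` {..<card S} = S"
  proof
    show "(\<lambda>k. elem S (Suc k)) ` {..<card S} \<subseteq> S"
    proof
      fix a assume "a \<in> (\<lambda>k. elem S (Suc k)) ` {..<card S}"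
      then obtain k where "k < card S" "a = ?l ! k" by (auto simp: elem_eq)
      then show "a \<in> S" using st len nth_mem[of k ?l] by simp
    qed
    show "S \<subseteq> (\<lambda>k. elem S (Suc k)) ` {..<card S}"
    proof
      fix a assume "a \<in> S"
      then have "a \<in> set ?l" using st by simp
      then obtain k where "k < length ?l" "?l ! k = a" by (metis in_set_conv_nth)
      then show "a \<in> (\<lambda>k. elem S (Suc k)) ` {..<card S}" using len
        by (auto simp: elem_eq intro!: image_eqI[of _ _ k])
    qed
  qed
qed


lemma cell_facts:
  assumes n: "1 \<le> n" and S: "S \<subseteq> {1..m * n}"
  shows "k < card S \<Longrightarrow> cellS n S k \<in> phi n ` S"
    "inj_on (cellS n S) {..<card S}"
    "cellS n S ` {..<card S} = phi n ` S"
    "phi n ` S \<subseteq> {1..m} \<times> {1..n}"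
    "card (phi n ` S) = card S"
    "k < card S \<Longrightarrow> cellS n S k \<in> {1..m} \<times> {1..n}"
proof -
  have fin: "finite S" using S finite_subset by blast
  have injphi: "inj_on (phi n) S" using phi_inj[OF n] inj_on_subset[of "phi n" "{1..}" S] S by force
  note E = elem_facts[OF fin]
  show "cellS n S k \<in> phi n ` S" if "k < card S" using E(1)[OF that] by (simp add: cellS_def)
  show "inj_on (cellS n S) {..<card S}"
  proof (rule inj_onI)
    fix x y assume x: "x \<in> {..<card S}" and y: "y \<in> {..<card S}" and e: "cellS n S x = cellS n S y"
    have "elem S (Suc x) = elem S (Suc y)"
      using e E(1)[of x] E(1)[of y] x y injphi by (auto simp: cellS_def dest: inj_onD)
    then show "x = y" using E(2) x y by (auto dest: inj_onD)
  qed
  show "cellS n S ` {..<card S} = phi n ` S"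
    using E(3) unfolding cellS_def by (metis image_image)
  show sub: "phi n ` S \<subseteq> {1..m} \<times> {1..n}" using phi_range[OF n] S by blast
  show "card (phi n ` S) = card S" using card_image[OF injphi] .
  show "cellS n S k \<in> {1..m} \<times> {1..n}" if "k < card S" using E(1)[OF that] sub by (auto simp: cellS_def)
qed

lemma sum_cells:
  assumes n: "1 \<le> n" and S: "S \<subseteq> {1..m * n}"
  shows "(\<Sum>k\<in>{k. k < card S \<and> Pr (cellS n S k)}. g (cellS n S k)) = sum g {c \<in> phi n ` S. Pr c}"
proof -
  note C = cell_facts[OF n S]
  have "{c \<in> phi n ` S. Pr c} = cellS n S ` {k. k < card S \<and> Pr (cellS n S k)}"
  proof
    show "{c \<in> phi n ` S. Pr c} \<subseteq> cellS n S ` {k. k < card S \<and> Pr (cellS n S k)}"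
    proof
      fix c assume "c \<in> {c \<in> phi n ` S. Pr c}"
      then have "c \<in> cellS n S ` {..<card S}" "Pr c" using C(3) by auto
      then obtain k where "k < card S" "c = cellS n S k" "Pr c" by auto
      then show "c \<in> cellS n S ` {k. k < card S \<and> Pr (cellS n S k)}" by auto
    qed
    show "cellS n S ` {k. k < card S \<and> Pr (cellS n S k)} \<subseteq> {c \<in> phi n ` S. Pr c}"
      using C(1) by auto
  qed
  moreover have "inj_on (cellS n S) {k. k < card S \<and> Pr (cellS n S k)}"
    by (rule inj_on_subset[OF C(2)]) auto
  ultimately show ?thesis by (simp add: sum.reindex)
qed

lemma sum_filter_lt: "(\<Sum>k<(N::nat). if P k then f k else 0) = sum f {k. k < N \<and> P k}"
proof -
  have e: "{k. k < N \<and> P k} = {k\<in>{..<N}. P k}" by auto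
  show ?thesis unfolding e by (rule sum.inter_filter[symmetric]) simp
qed

lemma struct_mat_carrier: "struct_mat m n S \<in> carrier_mat (m + n - 1) (m + n - 1)"
  by (simp add: struct_mat_def)

lemma entry_formula:
  assumes c: "cellS n S k = (t, r)" and r: "1 \<le> r" and s: "Suc s < m + n"
  shows "struct_entry m n S (Suc s) (Suc k) = (if Suc s < m then (if t = Suc s then 1 else 0)
      else if Suc s = m then 1 else (if r = Suc s - m then 1 else 0))"
proof -
  have p: "phi n (elem S (Suc k)) = (t, r)" using c by (simp add: cellS_def)
  show ?thesis unfolding struct_entry_def p Let_def using r s by auto
qed

lemma mv_formula:
  assumes n: "1 \<le> n" and m: "1 \<le> m" and S: "S \<subseteq> {1..m * n}" and cS: "card S = m + n - 1"
    and v: "v \<in> carrier_vec (m + n - 1)" and s: "s < m + n - 1"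
  shows "(struct_mat m n S *\<^sub>v v) $ s =
    (if Suc s < m then sum (\<lambda>k. v $ k) {k. k < m + n - 1 \<and> fst (cellS n S k) = Suc s}
     else if Suc s = m then sum (\<lambda>k. v $ k) {..<m + n - 1}
     else sum (\<lambda>k. v $ k) {k. k < m + n - 1 \<and> snd (cellS n S k) = Suc s - m})"
proof -
  define N where "N = m + n - 1"
  define A where "A = struct_mat m n S"
  have A: "A \<in> carrier_mat N N" by (simp add: A_def N_def struct_mat_def)
  have sN: "s < N" using s by (simp add: N_def)
  have "(A *\<^sub>v v) $ s = row A s \<bullet> v" using A sN by simp
  also have "\<dots> = (\<Sum>k<N. A $$ (s, k) * v $ k)"
    using A v sN by (simp add: scalar_prod_def N_def atLeast0LessThan)
  also have "\<dots> = (\<Sum>k<N. (if Suc s < m then (if fst (cellS n S k) = Suc s then v $ k else 0)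
      else if Suc s = m then v $ k else (if snd (cellS n S k) = Suc s - m then v $ k else 0)))"
  proof (rule sum.cong[OF refl])
    fix k assume k: "k \<in> {..<N}"
    obtain t r where c: "cellS n S k = (t, r)" by (cases "cellS n S k")
    have "cellS n S k \<in> {1..m} \<times> {1..n}" using cell_facts(6)[OF n S] k cS by (simp add: N_def)
    then have r: "1 \<le> r" using c by auto
    have ss: "Suc s < m + n" using sN by (simp add: N_def)
    have "A $$ (s, k) = struct_entry m n S (Suc s) (Suc k)"
      using sN k by (simp add: A_def struct_mat_def N_def)
    then show "A $$ (s, k) * v $ k = (if Suc s < m then (if fst (cellS n S k) = Suc s then v $ k else 0)
      else if Suc s = m then v $ k else (if snd (cellS n S k) = Suc s - m then v $ k else 0))"
      using entry_formula[OF c r ss] c by simp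
  qed
  finally show ?thesis unfolding A_def N_def
    by (cases "Suc s < m"; cases "Suc s = m") (simp_all add: sum_filter_lt)
qed


lemma total_rows:
  fixes m n :: nat and g :: "nat \<times> nat \<Rightarrow> real"
  assumes F: "F \<subseteq> {1..m} \<times> {1..n}"
  shows "sum g F = (\<Sum>i=1..m. sum g {c\<in>F. fst c = i})"
proof -
  have fin: "finite F" by (rule finite_subset[OF F]) auto
  have "sum g F = (\<Sum>y\<in>fst ` F. sum g {x\<in>F. fst x = y})" by (rule sum.image_gen[OF fin])
  also have "\<dots> = (\<Sum>i=1..m. sum g {c\<in>F. fst c = i})"
  proof (rule sum.mono_neutral_left)
    show "finite {1..m}" by simp
    show "fst ` F \<subseteq> {1..m}" using F by auto
    show "\<forall>i\<in>{1..m} - fst ` F. sum g {c\<in>F. fst c = i} = 0"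
    proof
      fix i assume "i \<in> {1..m} - fst ` F"
      then have "{c\<in>F. fst c = i} = {}" by blast
      then show "sum g {c\<in>F. fst c = i} = 0" by (simp only: sum.empty)
    qed
  qed
  finally show ?thesis .
qed

lemma total_cols:
  fixes m n :: nat and g :: "nat \<times> nat \<Rightarrow> real"
  assumes F: "F \<subseteq> {1..m} \<times> {1..n}"
  shows "sum g F = (\<Sum>j=1..n. sum g {c\<in>F. snd c = j})"
proof -
  have fin: "finite F" by (rule finite_subset[OF F]) auto
  have "sum g F = (\<Sum>y\<in>snd ` F. sum g {x\<in>F. snd x = y})" by (rule sum.image_gen[OF fin])
  also have "\<dots> = (\<Sum>j=1..n. sum g {c\<in>F. snd c = j})"
  proof (rule sum.mono_neutral_left)
    show "finite {1..n}" by simp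
    show "snd ` F \<subseteq> {1..n}" using F by auto
    show "\<forall>i\<in>{1..n} - snd ` F. sum g {c\<in>F. snd c = i} = 0"
    proof
      fix i assume "i \<in> {1..n} - snd ` F"
      then have "{c\<in>F. snd c = i} = {}" by blast
      then show "sum g {c\<in>F. snd c = i} = 0" by (simp only: sum.empty)
    qed
  qed
  finally show ?thesis .
qed

lemma sum_split_last:
  fixes f :: "nat \<Rightarrow> real"
  assumes "1 \<le> (m::nat)" shows "(\<Sum>i=1..m. f i) = f m + (\<Sum>i=1..m-1. f i)"
proof -
  have "{1..m} = insert m {1..m-1}" using assms by auto
  moreover have "sum f (insert m {1..m-1}) = f m + sum f {1..m-1}" by (rule sum.insert) auto
  ultimately show ?thesis by simp
qed

lemma vec_zm:
  fixes g :: "nat \<times> nat \<Rightarrow> real"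
  assumes n: "1 \<le> n" and m: "1 \<le> m" and S: "S \<subseteq> {1..m * n}" and cS: "card S = m + n - 1"
  shows "zm (phi n ` S) g \<longleftrightarrow>
    struct_mat m n S *\<^sub>v vec (m + n - 1) (\<lambda>k. g (cellS n S k)) = 0\<^sub>v (m + n - 1)"
proof -
  define N where "N = m + n - 1"
  define T where "T = phi n ` S"
  define v where "v = vec N (\<lambda>k. g (cellS n S k))"
  have v: "v \<in> carrier_vec N" by (simp add: v_def)
  have TF: "T \<subseteq> {1..m} \<times> {1..n}" using cell_facts(4)[OF n S] by (simp add: T_def)
  define rs where "rs i = sum g {c\<in>T. fst c = i}" for i
  define cs where "cs j = sum g {c\<in>T. snd c = j}" for j
  have sc: "(\<Sum>k\<in>{k. k < N \<and> Pr (cellS n S k)}. v $ k) = sum g {c \<in> T. Pr c}" for Pr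
  proof -
    have "(\<Sum>k\<in>{k. k < N \<and> Pr (cellS n S k)}. v $ k) = (\<Sum>k\<in>{k. k < N \<and> Pr (cellS n S k)}. g (cellS n S k))"
      by (rule sum.cong) (auto simp: v_def)
    also have "\<dots> = sum g {c \<in> T. Pr c}" using sum_cells[OF n S, where Pr=Pr and g=g] cS by (simp add: T_def N_def)
    finally show ?thesis .
  qed
  have tot: "(\<Sum>k<N. v $ k) = sum g T" using sc[of "\<lambda>c. True"] by (simp add: lessThan_def)
  have mv: "(struct_mat m n S *\<^sub>v v) $ s = (if Suc s < m then rs (Suc s) else if Suc s = m then sum g T
      else cs (Suc s - m))" if "s < N" for s
    using mv_formula[OF n m S cS, of v s] v that sc[of "\<lambda>c. fst c = Suc s"] sc[of "\<lambda>c. snd c = Suc s - m"] tot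
    by (simp add: N_def rs_def cs_def)
  have totr: "sum g T = (\<Sum>i=1..m. rs i)" unfolding rs_def by (rule total_rows[OF TF])
  have totc: "sum g T = (\<Sum>j=1..n. cs j)" unfolding cs_def by (rule total_cols[OF TF])
  have rs0: "rs i = 0" if "i \<notin> {1..m}" for i
  proof -
    have "{c\<in>T. fst c = i} = {}" using that TF by auto
    then show ?thesis unfolding rs_def by (simp only: sum.empty)
  qed
  have cs0: "cs j = 0" if "j \<notin> {1..n}" for j
  proof -
    have "{c\<in>T. snd c = j} = {}" using that TF by auto
    then show ?thesis unfolding cs_def by (simp only: sum.empty)
  qed
  have "zm T g \<longleftrightarrow> struct_mat m n S *\<^sub>v v = 0\<^sub>v N"
  proof
    assume z: "zm T g"
    then have r: "rs i = 0" "cs i = 0" for i unfolding zm_def rs_def cs_def by blast+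
    have "sum g T = 0" using totr r by simp
    show "struct_mat m n S *\<^sub>v v = 0\<^sub>v N"
    proof (rule eq_vecI)
      show "dim_vec (struct_mat m n S *\<^sub>v v) = dim_vec (0\<^sub>v N)" by (simp add: struct_mat_def N_def)
      fix s assume "s < dim_vec (0\<^sub>v N)"
      then have s: "s < N" by simp
      show "(struct_mat m n S *\<^sub>v v) $ s = 0\<^sub>v N $ s" using mv[OF s] r \<open>sum g T = 0\<close> s by simp
    qed
  next
    assume z: "struct_mat m n S *\<^sub>v v = 0\<^sub>v N"
    have e: "(struct_mat m n S *\<^sub>v v) $ s = 0" if "s < N" for s using z that by simp
    have r: "rs i = 0" if "1 \<le> i" "i < m" for i
      using e[of "i - 1"] mv[of "i - 1"] that by (simp add: N_def)
    have c: "cs j = 0" if "1 \<le> j" "j < n" for j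
    proof -
      have "m + j - 1 < N" using that m by (simp add: N_def)
      then show ?thesis using e[of "m + j - 1"] mv[of "m + j - 1"] that m by simp
    qed
    have t: "sum g T = 0" using e[of "m - 1"] mv[of "m - 1"] m n by (simp add: N_def)
    have "(\<Sum>i=1..m-1. rs i) = 0" using r by (intro sum.neutral) auto
    then have rm: "rs m = 0" using totr t sum_split_last[OF m, of rs] by simp
    have "(\<Sum>j=1..n-1. cs j) = 0" using c by (intro sum.neutral) auto
    then have cn: "cs n = 0" using totc t sum_split_last[OF n, of cs] by simp
    have "rs i = 0" for i
      using r[of i] rm rs0[of i] by (cases "i \<in> {1..m}") (auto simp: le_less)
    moreover have "cs j = 0" for j
      using c[of j] cn cs0[of j] by (cases "j \<in> {1..n}") (auto simp: le_less)
    ultimately show "zm T g" unfolding zm_def rs_def cs_def by blast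
  qed
  then show ?thesis unfolding T_def v_def N_def .
qed


lemma det_indep:
  assumes n: "1 \<le> n" and m: "1 \<le> m" and S: "S \<subseteq> {1..m * n}" and cS: "card S = m + n - 1"
  shows "det (struct_mat m n S) \<noteq> 0 \<longleftrightarrow> indep (phi n ` S)"
proof -
  define N where "N = m + n - 1"
  define A where "A = struct_mat m n S"
  have A: "A \<in> carrier_mat N N" by (simp add: A_def N_def struct_mat_def)
  note C = cell_facts[OF n S]
  have injc: "inj_on (cellS n S) {..<N}" using C(2) cS by (simp add: N_def)
  have imc: "cellS n S ` {..<N} = phi n ` S" using C(3) cS by (simp add: N_def)
  show ?thesis
  proof
    assume d: "det (struct_mat m n S) \<noteq> 0"
    show "indep (phi n ` S)" unfolding indep_def
    proof (intro allI impI)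
      fix g assume z: "zm (phi n ` S) g"
      define v where "v = vec N (\<lambda>k. g (cellS n S k))"
      have "A *\<^sub>v v = 0\<^sub>v N" using z vec_zm[OF n m S cS, of g] by (simp add: A_def v_def N_def)
      moreover have vc: "v \<in> carrier_vec N" by (simp add: v_def)
      moreover have "\<not> (\<exists>v. v \<in> carrier_vec N \<and> v \<noteq> 0\<^sub>v N \<and> A *\<^sub>v v = 0\<^sub>v N)"
        using d det_0_iff_vec_prod_zero[OF A] by (simp add: A_def)
      ultimately have "v = 0\<^sub>v N" by blast
      then have "g (cellS n S k) = 0" if "k < N" for k
        using that by (metis index_vec index_zero_vec(1) v_def)
      show "\<forall>c\<in>phi n ` S. g c = 0"
      proof
        fix c assume "c \<in> phi n ` S"
        then have "c \<in> cellS n S ` {..<N}" using imc by simp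
        then obtain k where "k < N" "c = cellS n S k" by auto
        then show "g c = 0" using \<open>\<And>k. k < N \<Longrightarrow> g (cellS n S k) = 0\<close> by simp
      qed
    qed
  next
    assume ind: "indep (phi n ` S)"
    show "det (struct_mat m n S) \<noteq> 0"
    proof
      assume "det (struct_mat m n S) = 0"
      then obtain v where v: "v \<in> carrier_vec N" "v \<noteq> 0\<^sub>v N" "A *\<^sub>v v = 0\<^sub>v N"
        using det_0_iff_vec_prod_zero[OF A] by (auto simp: A_def)
      define g where "g c = v $ (the_inv_into {..<N} (cellS n S) c)" for c
      have gc: "g (cellS n S k) = v $ k" if "k < N" for k
        using the_inv_into_f_f[OF injc] that by (simp add: g_def)
      have "vec N (\<lambda>k. g (cellS n S k)) = v"
        by (rule eq_vecI) (use v gc in auto)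
      then have "zm (phi n ` S) g" using vec_zm[OF n m S cS, of g] v by (simp add: A_def N_def)
      then have "\<forall>c\<in>phi n ` S. g c = 0" using ind unfolding indep_def by (meson spec)
      then have "v $ k = 0" if "k < N" for k
      proof -
        have "cellS n S k \<in> phi n ` S" using imc that by blast
        then show ?thesis using gc[OF that] \<open>\<forall>c\<in>phi n ` S. g c = 0\<close> by simp
      qed
      then have "v = 0\<^sub>v N" by (intro eq_vecI) (use v in auto)
      then show False using v by simp
    qed
  qed
qed

lemma yvec_carrier: "yvec m n p q \<in> carrier_vec (m + n - 1)"
  by (simp add: yvec_def)

lemma mat_inv_some:
  assumes A: "A \<in> carrier_mat N N" and d: "det A \<noteq> 0"
  obtains B where "mat_inverse A = Some B" "A * B = 1\<^sub>m N" "B * A = 1\<^sub>m N" "B \<in> carrier_mat N N"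
proof -
  have "mat_inverse A \<noteq> None"
  proof
    assume "mat_inverse A = None"
    from mat_inverse(1)[OF A this, where b="()"] det_non_zero_imp_unit[OF A d, where b="()"]
    show False by blast
  qed
  then obtain B where B: "mat_inverse A = Some B" by blast
  from mat_inverse(2)[OF A B] show ?thesis using that B by blast
qed

lemma sol_solves:
  assumes d: "det (struct_mat m n S) \<noteq> 0"
  shows "struct_mat m n S *\<^sub>v sol m n p q S = yvec m n p q"
    "sol m n p q S \<in> carrier_vec (m + n - 1)"
proof -
  let ?N = "m + n - 1"
  have A: "struct_mat m n S \<in> carrier_mat ?N ?N" by (rule struct_mat_carrier)
  obtain B where B: "mat_inverse (struct_mat m n S) = Some B" "struct_mat m n S * B = 1\<^sub>m ?N"
    "B \<in> carrier_mat ?N ?N" using mat_inv_some[OF A d] by metis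
  have "struct_mat m n S *\<^sub>v sol m n p q S = struct_mat m n S *\<^sub>v (B *\<^sub>v yvec m n p q)"
    by (simp add: sol_def B(1))
  also have "\<dots> = (struct_mat m n S * B) *\<^sub>v yvec m n p q"
    using assoc_mult_mat_vec[OF A B(3) yvec_carrier] by simp
  also have "\<dots> = yvec m n p q" using B(2) yvec_carrier by simp
  finally show "struct_mat m n S *\<^sub>v sol m n p q S = yvec m n p q" .
  show "sol m n p q S \<in> carrier_vec ?N" using B(1,3) yvec_carrier by (simp add: sol_def)
qed

lemma sol_unique:
  assumes d: "det (struct_mat m n S) \<noteq> 0" and x: "x \<in> carrier_vec (m + n - 1)"
    and e: "struct_mat m n S *\<^sub>v x = yvec m n p q"
  shows "sol m n p q S = x"
proof -
  let ?N = "m + n - 1"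
  have A: "struct_mat m n S \<in> carrier_mat ?N ?N" by (rule struct_mat_carrier)
  obtain B where B: "mat_inverse (struct_mat m n S) = Some B" "B * struct_mat m n S = 1\<^sub>m ?N"
    "B \<in> carrier_mat ?N ?N" using mat_inv_some[OF A d] by metis
  have "sol m n p q S = B *\<^sub>v (struct_mat m n S *\<^sub>v x)" by (simp add: sol_def B(1) e)
  also have "\<dots> = (B * struct_mat m n S) *\<^sub>v x" using assoc_mult_mat_vec[OF B(3) A x] by simp
  also have "\<dots> = x" using B(2) x by simp
  finally show ?thesis .
qed

lemma P_of_cell:
  assumes n: "1 \<le> n" and S: "S \<subseteq> {1..m * n}" and cS: "card S = m + n - 1" and k: "k < m + n - 1"
  shows "P_of m n p q S (fst (cellS n S k)) (snd (cellS n S k)) = sol m n p q S $ k"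
proof -
  let ?N = "m + n - 1"
  note C = cell_facts[OF n S]
  have injc: "inj_on (cellS n S) {..<?N}" using C(2) cS by simp
  let ?c = "(fst (cellS n S k), snd (cellS n S k))"
  have ex: "Suc k \<in> {1..?N} \<and> phi n (elem S (Suc k)) = ?c" using k by (simp add: cellS_def)
  have un: "l = Suc k" if "l \<in> {1..?N} \<and> phi n (elem S l) = ?c" for l
  proof -
    have "l \<noteq> 0" using that by auto
    then obtain l' where l': "l = Suc l'" using not0_implies_Suc by blast
    have "l' < ?N" using that l' by auto
    moreover have "cellS n S l' = cellS n S k" using that l' by (simp add: cellS_def)
    ultimately have "l' = k" using injc k by (auto dest: inj_onD)
    then show ?thesis using l' by simp
  qed
  have "(THE l. l \<in> {1..?N} \<and> phi n (elem S l) = ?c) = Suc k"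
    by (rule the_equality) (use ex un in blast)+
  then show ?thesis using ex unfolding P_of_def by auto
qed

lemma P_of_out:
  assumes fin: "finite S" and cS: "card S = m + n - 1" and out: "(i, j) \<notin> phi n ` S"
  shows "P_of m n p q S i j = 0"
proof -
  have "\<not> (\<exists>l\<in>{1..m + n - 1}. phi n (elem S l) = (i, j))"
  proof
    assume "\<exists>l\<in>{1..m + n - 1}. phi n (elem S l) = (i, j)"
    then obtain l where l: "l \<in> {1..m + n - 1}" "phi n (elem S l) = (i, j)" by blast
    obtain l' where l': "l = Suc l'" using l by (cases l) auto
    have "l' < card S" using l l' cS by auto
    then have "elem S (Suc l') \<in> S" by (rule elem_facts(1)[OF fin])
    then show False using l l' out by force
  qed
  then show ?thesis unfolding P_of_def by simp
qed


lemma sum_shift1: "(\<Sum>l=1..N. f (l - 1)) = (\<Sum>k<(N::nat). (f k :: real))"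
  by (induction N) (auto simp: atLeastLessThanSuc)

lemma row_col_vec:
  fixes g :: "nat \<times> nat \<Rightarrow> real"
  assumes n: "1 \<le> n" and m: "1 \<le> m" and S: "S \<subseteq> {1..m * n}" and cS: "card S = m + n - 1"
    and pp: "prob_vec m p" and pq: "prob_vec n q"
  shows "((\<forall>i\<in>{1..m}. sum g {c\<in>phi n ` S. fst c = i} = p i) \<and>
          (\<forall>j\<in>{1..n}. sum g {c\<in>phi n ` S. snd c = j} = q j)) \<longleftrightarrow>
    struct_mat m n S *\<^sub>v vec (m + n - 1) (\<lambda>k. g (cellS n S k)) = yvec m n p q"
proof -
  define N where "N = m + n - 1"
  define T where "T = phi n ` S"
  define v where "v = vec N (\<lambda>k. g (cellS n S k))"
  have v: "v \<in> carrier_vec N" by (simp add: v_def)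
  have TF: "T \<subseteq> {1..m} \<times> {1..n}" using cell_facts(4)[OF n S] by (simp add: T_def)
  define rs where "rs i = sum g {c\<in>T. fst c = i}" for i
  define cs where "cs j = sum g {c\<in>T. snd c = j}" for j
  have sc: "(\<Sum>k\<in>{k. k < N \<and> Pr (cellS n S k)}. v $ k) = sum g {c \<in> T. Pr c}" for Pr
  proof -
    have "(\<Sum>k\<in>{k. k < N \<and> Pr (cellS n S k)}. v $ k) = (\<Sum>k\<in>{k. k < N \<and> Pr (cellS n S k)}. g (cellS n S k))"
      by (rule sum.cong) (auto simp: v_def)
    also have "\<dots> = sum g {c \<in> T. Pr c}" using sum_cells[OF n S, where Pr=Pr and g=g] cS by (simp add: T_def N_def)
    finally show ?thesis .
  qed
  have tot: "(\<Sum>k<N. v $ k) = sum g T" using sc[of "\<lambda>c. True"] by (simp add: lessThan_def)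
  have mv: "(struct_mat m n S *\<^sub>v v) $ s = (if Suc s < m then rs (Suc s) else if Suc s = m then sum g T
      else cs (Suc s - m))" if "s < N" for s
    using mv_formula[OF n m S cS, of v s] v that sc[of "\<lambda>c. fst c = Suc s"] sc[of "\<lambda>c. snd c = Suc s - m"] tot
    by (simp add: N_def rs_def cs_def)
  have totr: "sum g T = (\<Sum>i=1..m. rs i)" unfolding rs_def by (rule total_rows[OF TF])
  have totc: "sum g T = (\<Sum>j=1..n. cs j)" unfolding cs_def by (rule total_cols[OF TF])
  have p1: "(\<Sum>i=1..m. p i) = 1" and q1: "(\<Sum>j=1..n. q j) = 1" using pp pq by (auto simp: prob_vec_def)
  have y: "yvec m n p q $ s = (if Suc s < m then p (Suc s) else if Suc s = m then 1 else q (Suc s - m))"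
    if "s < N" for s using that by (simp add: yvec_def N_def)
  have "((\<forall>i\<in>{1..m}. rs i = p i) \<and> (\<forall>j\<in>{1..n}. cs j = q j)) \<longleftrightarrow> struct_mat m n S *\<^sub>v v = yvec m n p q"
  proof
    assume r: "(\<forall>i\<in>{1..m}. rs i = p i) \<and> (\<forall>j\<in>{1..n}. cs j = q j)"
    have "sum g T = 1" using totr r p1 by simp
    show "struct_mat m n S *\<^sub>v v = yvec m n p q"
    proof (rule eq_vecI)
      show "dim_vec (struct_mat m n S *\<^sub>v v) = dim_vec (yvec m n p q)" by (simp add: struct_mat_def yvec_def)
      fix s assume "s < dim_vec (yvec m n p q)"
      then have s: "s < N" by (simp add: yvec_def N_def)
      have "Suc s - m \<in> {1..n}" if "\<not> Suc s < m" "Suc s \<noteq> m" using that s by (auto simp: N_def)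
      then show "(struct_mat m n S *\<^sub>v v) $ s = yvec m n p q $ s"
        using mv[OF s] y[OF s] r \<open>sum g T = 1\<close> s by auto
    qed
  next
    assume z: "struct_mat m n S *\<^sub>v v = yvec m n p q"
    have e: "(struct_mat m n S *\<^sub>v v) $ s = yvec m n p q $ s" if "s < N" for s using z that by simp
    have r: "rs i = p i" if "1 \<le> i" "i < m" for i
      using e[of "i - 1"] mv[of "i - 1"] y[of "i - 1"] that by (simp add: N_def)
    have c: "cs j = q j" if "1 \<le> j" "j < n" for j
    proof -
      have "m + j - 1 < N" using that m by (simp add: N_def)
      then show ?thesis using e[of "m + j - 1"] mv[of "m + j - 1"] y[of "m + j - 1"] that m by simp
    qed
    have t: "sum g T = 1" using e[of "m - 1"] mv[of "m - 1"] y[of "m - 1"] m n by (simp add: N_def)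
    have "(\<Sum>i=1..m-1. rs i) = (\<Sum>i=1..m-1. p i)" using r by (intro sum.cong) auto
    then have rm: "rs m = p m" using totr t sum_split_last[OF m, of rs] sum_split_last[OF m, of p] p1 by simp
    have "(\<Sum>j=1..n-1. cs j) = (\<Sum>j=1..n-1. q j)" using c by (intro sum.cong) auto
    then have cn: "cs n = q n" using totc t sum_split_last[OF n, of cs] sum_split_last[OF n, of q] q1 by simp
    have "\<forall>i\<in>{1..m}. rs i = p i" using r rm by (auto simp: le_less)
    moreover have "\<forall>j\<in>{1..n}. cs j = q j" using c cn by (auto simp: le_less)
    ultimately show "(\<forall>i\<in>{1..m}. rs i = p i) \<and> (\<forall>j\<in>{1..n}. cs j = q j)" by blast
  qed
  then show ?thesis unfolding T_def v_def N_def rs_def cs_def .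
qed

lemma tree_to_Pof:
  assumes m: "2 \<le> m" and n: "2 \<le> n" and pp: "prob_vec m p" and pq: "prob_vec n q"
    and PT: "P \<in> tree_couplings m n p q"
  shows "\<exists>S. S \<in> index_sets m n \<and> feasible m n p q S \<and> P_of m n p q S = P"
proof -
  have m1: "1 \<le> m" and n1: "1 \<le> n" using m n by auto
  define N where "N = m + n - 1"
  obtain T where P: "P \<in> coupling m n p q" and T: "T \<subseteq> {1..m} \<times> {1..n}" "is_tree T"
      "card T = m + n - 1" "support P \<subseteq> T"
    using PT unfolding tree_couplings_def by blast
  define S where "S = psi n ` T"
  have injpsi: "inj_on (psi n) T"
    by (rule inj_on_inverseI[where g="phi n"]) (use T(1) phi_psi in blast)
  have Ssub: "S \<subseteq> {1..m * n}"
  proof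
    fix x assume "x \<in> S"
    then obtain c where c: "c \<in> T" "x = psi n c" by (auto simp: S_def)
    then have "c \<in> {1..m} \<times> {1..n}" using T(1) by blast
    then show "x \<in> {1..m * n}" using psi_range c(2) by blast
  qed
  have cS: "card S = m + n - 1" using card_image[OF injpsi] T(3) by (simp add: S_def)
  have phiS: "phi n ` S = T"
  proof -
    have "phi n ` S = (\<lambda>c. phi n (psi n c)) ` T" by (simp add: S_def image_image)
    also have "\<dots> = (\<lambda>c. c) ` T"
      by (rule image_cong[OF refl]) (use phi_psi T(1) in blast)
    also have "\<dots> = T" by simp
    finally show ?thesis .
  qed
  have finS: "finite S" by (rule finite_subset[OF Ssub]) simp
  have finT: "finite T" by (rule finite_subset[OF T(1)]) auto
  have indT: "indep T" using nocirc_indep[OF finT] T(2) by (simp add: is_tree_def)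
  have det: "det (struct_mat m n S) \<noteq> 0" using det_indep[OF n1 m1 Ssub cS] indT phiS by simp
  define x where "x = vec N (\<lambda>k. cf P (cellS n S k))"
  have xc: "x \<in> carrier_vec (m + n - 1)" by (simp add: x_def N_def)
  have rows: "\<forall>i\<in>{1..m}. sum (cf P) {c\<in>phi n ` S. fst c = i} = p i"
  proof
    fix i assume i: "i \<in> {1..m}"
    have "sum (cf P) {c\<in>phi n ` S. fst c = i} = (\<Sum>j=1..n. P i j)"
      using row_conv[OF T(1) T(4)] phiS by simp
    also have "\<dots> = p i" using P i unfolding coupling_def by blast
    finally show "sum (cf P) {c\<in>phi n ` S. fst c = i} = p i" .
  qed
  have cols: "\<forall>j\<in>{1..n}. sum (cf P) {c\<in>phi n ` S. snd c = j} = q j"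
  proof
    fix j assume j: "j \<in> {1..n}"
    have "sum (cf P) {c\<in>phi n ` S. snd c = j} = (\<Sum>i=1..m. P i j)"
      using col_conv[OF T(1) T(4)] phiS by simp
    also have "\<dots> = q j" using P j unfolding coupling_def by blast
    finally show "sum (cf P) {c\<in>phi n ` S. snd c = j} = q j" .
  qed
  have Ax: "struct_mat m n S *\<^sub>v x = yvec m n p q"
    using row_col_vec[OF n1 m1 Ssub cS pp pq, of "cf P"] rows cols by (simp add: x_def N_def)
  have solx: "sol m n p q S = x" by (rule sol_unique[OF det xc Ax])
  have Pnn: "0 \<le> P i j" for i j using P unfolding coupling_def by blast
  have sum1: "(\<Sum>k<m + n - 1. x $ k) = 1"
  proof -
    have s: "m - 1 < m + n - 1" using m n by simp
    have "(struct_mat m n S *\<^sub>v x) $ (m - 1) = (\<Sum>k<m + n - 1. x $ k)"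
      using mv_formula[OF n1 m1 Ssub cS xc s] m by simp
    moreover have "yvec m n p q $ (m - 1) = 1" using s m by (simp add: yvec_def)
    ultimately show ?thesis using Ax by simp
  qed
  have feas: "feasible m n p q S"
    unfolding feasible_def prob_vec_def
  proof (intro conjI det ballI)
    fix l assume l: "l \<in> {1..m + n - 1}"
    then have "l - 1 < N" by (auto simp: N_def)
    then show "0 \<le> sol m n p q S $ (l - 1)" using Pnn by (simp add: solx x_def cf_def)
  next
    show "(\<Sum>l = 1..m + n - 1. sol m n p q S $ (l - 1)) = 1"
      using sum1 sum_shift1[where N="m + n - 1" and f="\<lambda>k. sol m n p q S $ k"] by (simp add: solx)
  qed
  have PofP: "P_of m n p q S = P"
  proof (intro ext)
    fix i j
    show "P_of m n p q S i j = P i j"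
    proof (cases "(i, j) \<in> T")
      case True
      then have "(i, j) \<in> cellS n S ` {..<card S}" using cell_facts(3)[OF n1 Ssub] phiS by simp
      then obtain k where k: "k < m + n - 1" "(i, j) = cellS n S k" using cS by auto
      have "P_of m n p q S i j = sol m n p q S $ k"
        using P_of_cell[OF n1 Ssub cS k(1)] k(2) by (metis fst_conv snd_conv)
      also have "\<dots> = cf P (cellS n S k)" using k(1) by (simp add: solx x_def N_def)
      also have "\<dots> = P i j" using k(2) by (metis cf_def fst_conv snd_conv)
      finally show ?thesis .
    next
      case False
      then have "P_of m n p q S i j = 0" using P_of_out[OF finS cS] phiS by simp
      moreover have "P i j = 0" using False T(4) by (auto simp: support_def)
      ultimately show ?thesis by simp
    qed
  qed
  have "S \<in> index_sets m n" using Ssub cS by (simp add: index_sets_def)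
  then show ?thesis using feas PofP by blast
qed

lemma Pof_to_tree:
  assumes m: "2 \<le> m" and n: "2 \<le> n" and pp: "prob_vec m p" and pq: "prob_vec n q"
    and SI: "S \<in> index_sets m n" and feas: "feasible m n p q S"
  shows "P_of m n p q S \<in> tree_couplings m n p q"
proof -
  have m1: "1 \<le> m" and n1: "1 \<le> n" using m n by auto
  have Ssub: "S \<subseteq> {1..m * n}" and cS: "card S = m + n - 1" using SI by (auto simp: index_sets_def)
  have finS: "finite S" by (rule finite_subset[OF Ssub]) simp
  define T where "T = phi n ` S"
  have TF: "T \<subseteq> {1..m} \<times> {1..n}" using cell_facts(4)[OF n1 Ssub] by (simp add: T_def)
  have cT: "card T = m + n - 1" using cell_facts(5)[OF n1 Ssub] cS by (simp add: T_def)
  have det: "det (struct_mat m n S) \<noteq> 0" using feas by (simp add: feasible_def)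
  have indT: "indep T" using det_indep[OF n1 m1 Ssub cS] det by (simp add: T_def)
  have tree: "is_tree T" by (rule tree_of_indep[OF m1 n1 TF indT cT])
  define P where "P = P_of m n p q S"
  have pv: "prob_vec (m + n - 1) (\<lambda>l. sol m n p q S $ (l - 1))" using feas by (simp add: feasible_def)
  have cfP: "cf P (cellS n S k) = sol m n p q S $ k" if "k < m + n - 1" for k
    using P_of_cell[OF n1 Ssub cS that] by (simp add: P_def cf_def)
  have solc: "sol m n p q S \<in> carrier_vec (m + n - 1)" and Asol: "struct_mat m n S *\<^sub>v sol m n p q S = yvec m n p q"
    using sol_solves[OF det] by auto
  have vP: "vec (m + n - 1) (\<lambda>k. cf P (cellS n S k)) = sol m n p q S"
    by (rule eq_vecI) (use solc cfP in auto)
  have rc: "(\<forall>i\<in>{1..m}. sum (cf P) {c\<in>T. fst c = i} = p i) \<and> (\<forall>j\<in>{1..n}. sum (cf P) {c\<in>T. snd c = j} = q j)"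
    using row_col_vec[OF n1 m1 Ssub cS pp pq, of "cf P"] vP Asol by (simp add: T_def)
  have out: "P i j = 0" if "(i, j) \<notin> T" for i j using P_of_out[OF finS cS] that by (simp add: P_def T_def)
  have sP: "support P \<subseteq> T" using out by (auto simp: support_def)
  have nn: "0 \<le> P i j" for i j
  proof (cases "(i, j) \<in> T")
    case True
    then have "(i, j) \<in> cellS n S ` {..<card S}" using cell_facts(3)[OF n1 Ssub] by (simp add: T_def)
    then obtain k where k: "k < m + n - 1" "(i, j) = cellS n S k" using cS by auto
    have "P i j = cf P (cellS n S k)" using k(2) by (metis cf_def fst_conv snd_conv)
    also have "\<dots> = sol m n p q S $ (Suc k - 1)" using cfP[OF k(1)] by simp
    also have "\<dots> \<ge> 0" using pv k(1) unfolding prob_vec_def by (metis atLeastAtMost_iff le_add1 less_eq_Suc_le plus_1_eq_Suc)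
    finally show ?thesis .
  next
    case False then show ?thesis using out by simp
  qed
  have coup: "P \<in> coupling m n p q"
  proof -
    have a: "\<forall>i j. P i j \<noteq> 0 \<longrightarrow> i \<in> {1..m} \<and> j \<in> {1..n}" using out TF by blast
    have b: "\<forall>i j. 0 \<le> P i j" using nn by blast
    have c: "\<forall>i\<in>{1..m}. (\<Sum>j=1..n. P i j) = p i" using rc row_conv[OF TF sP] by simp
    have d: "\<forall>j\<in>{1..n}. (\<Sum>i=1..m. P i j) = q j" using rc col_conv[OF TF sP] by simp
    show ?thesis unfolding coupling_def mem_Collect_eq using a b c d by (intro conjI)
  qed
  have "\<exists>T. T \<subseteq> {1..m} \<times> {1..n} \<and> is_tree T \<and> card T = m + n - 1 \<and> support P \<subseteq> T"
    using TF tree cT sP by blast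
  then show ?thesis using coup unfolding tree_couplings_def P_def[symmetric] by blast
qed


theorem theorem3p2:
  fixes m n :: nat and p q :: "nat \<Rightarrow> real" and H :: "rmat \<Rightarrow> real"
  assumes "2 \<le> m" and "2 \<le> n"
    and "prob_vec m p" and "prob_vec n q"
    and "\<forall>i\<in>{1..m}. 0 < p i" and "\<forall>j\<in>{1..n}. 0 < q j"
    and "strictly_concave_on (coupling m n p q) H"
  shows "extreme_points (coupling m n p q) = tree_couplings m n p q \<and>
         tree_couplings m n p q = {P_of m n p q S | S. S \<in> index_sets m n \<and> feasible m n p q S} \<and>
         (INF P\<in>coupling m n p q. ereal (H P)) = (INF P\<in>tree_couplings m n p q. ereal (H P)) \<and>
         (\<exists>P0\<in>tree_couplings m n p q. \<forall>P\<in>tree_couplings m n p q. H P0 \<le> H P) \<and>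
         (INF P\<in>tree_couplings m n p q. ereal (H P)) = Min (H_k m n p q H ` index_sets m n)"
proof -
  note m = assms(1) and n = assms(2) and pp = assms(3) and pq = assms(4)
  have m1: "1 \<le> m" and n1: "1 \<le> n" using m n by auto
  let ?C = "coupling m n p q" and ?T = "tree_couplings m n p q" and ?I = "index_sets m n"
  have E: "extreme_points ?C = ?T"
    using extreme_sub_tree[OF m1 n1] tree_sub_extreme by blast
  have B: "?T = {P_of m n p q S | S. S \<in> ?I \<and> feasible m n p q S}"
  proof
    show "?T \<subseteq> {P_of m n p q S | S. S \<in> ?I \<and> feasible m n p q S}"
      using tree_to_Pof[OF m n pp pq] by blast
    show "{P_of m n p q S | S. S \<in> ?I \<and> feasible m n p q S} \<subseteq> ?T"
      using Pof_to_tree[OF m n pp pq] by blast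
  qed
  have below: "\<exists>V\<in>?T. H V \<le> H P" if "P \<in> ?C" for P
    by (rule tree_below[OF m1 n1 assms(7) that])
  have TsubC: "?T \<subseteq> ?C" unfolding tree_couplings_def by blast
  have C: "(INF P\<in>?C. ereal (H P)) = (INF P\<in>?T. ereal (H P))"
  proof (rule antisym)
    show "(INF P\<in>?C. ereal (H P)) \<le> (INF P\<in>?T. ereal (H P))"
      by (rule INF_mono) (use TsubC in blast)
    show "(INF P\<in>?T. ereal (H P)) \<le> (INF P\<in>?C. ereal (H P))"
      by (rule INF_mono) (use below in auto)
  qed
  define P0 where "P0 i j = (if i \<in> {1..m} \<and> j \<in> {1..n} then p i * q j else 0)" for i j
  have p1: "(\<Sum>i=1..m. p i) = 1" and q1: "(\<Sum>j=1..n. q j) = 1" using pp pq by (auto simp: prob_vec_def)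
  have P0C: "P0 \<in> ?C"
  proof -
    have a: "\<forall>i j. P0 i j \<noteq> 0 \<longrightarrow> i \<in> {1..m} \<and> j \<in> {1..n}" by (simp add: P0_def)
    have b: "\<forall>i j. 0 \<le> P0 i j" using assms(5,6) by (simp add: P0_def less_imp_le)
    have c: "\<forall>i\<in>{1..m}. (\<Sum>j=1..n. P0 i j) = p i"
    proof
      fix i assume i: "i \<in> {1..m}"
      have "(\<Sum>j=1..n. P0 i j) = (\<Sum>j=1..n. p i * q j)" by (rule sum.cong) (use i in \<open>auto simp: P0_def\<close>)
      also have "\<dots> = p i" using q1 by (simp add: sum_distrib_left[symmetric])
      finally show "(\<Sum>j=1..n. P0 i j) = p i" .
    qed
    have d: "\<forall>j\<in>{1..n}. (\<Sum>i=1..m. P0 i j) = q j"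
    proof
      fix j assume j: "j \<in> {1..n}"
      have "(\<Sum>i=1..m. P0 i j) = (\<Sum>i=1..m. p i * q j)" by (rule sum.cong) (use j in \<open>auto simp: P0_def\<close>)
      also have "\<dots> = q j" using p1 by (simp add: sum_distrib_right[symmetric])
      finally show "(\<Sum>i=1..m. P0 i j) = q j" .
    qed
    show ?thesis unfolding coupling_def mem_Collect_eq using a b c d by (intro conjI)
  qed
  obtain V where V: "V \<in> ?T" using below[OF P0C] by blast
  have finI: "finite ?I"
  proof (rule finite_subset)
    show "?I \<subseteq> Pow {1..m * n}" by (auto simp: index_sets_def)
  qed simp
  have Timg: "?T = (\<lambda>S. P_of m n p q S) ` {S\<in>?I. feasible m n p q S}" using B by auto
  have finT: "finite ?T" using Timg finI by simp
  have D: "\<exists>P0\<in>?T. \<forall>P\<in>?T. H P0 \<le> H P"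
  proof -
    have ne: "H ` ?T \<noteq> {}" using V by blast
    have "Min (H ` ?T) \<in> H ` ?T" using finT ne by (intro Min_in) auto
    then obtain Q where Q: "Q \<in> ?T" "H Q = Min (H ` ?T)" by auto
    have "\<forall>P\<in>?T. H Q \<le> H P" using Q(2) finT by simp
    then show ?thesis using Q(1) by blast
  qed
  obtain SV where SV: "SV \<in> ?I" "feasible m n p q SV" "P_of m n p q SV = V"
    using tree_to_Pof[OF m n pp pq V] by blast
  have neI: "?I \<noteq> {}" using SV by blast
  define M where "M = Min (H_k m n p q H ` ?I)"
  have "M \<in> H_k m n p q H ` ?I" unfolding M_def using finI neI by (intro Min_in) auto
  then obtain S0 where S0: "S0 \<in> ?I" "M = H_k m n p q H S0" by blast
  have F: "(INF P\<in>?T. ereal (H P)) = M"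
  proof (rule antisym)
    show "(INF P\<in>?T. ereal (H P)) \<le> M"
    proof (cases "feasible m n p q S0")
      case True
      then have "P_of m n p q S0 \<in> ?T" using Pof_to_tree[OF m n pp pq S0(1)] by blast
      then have "(INF P\<in>?T. ereal (H P)) \<le> ereal (H (P_of m n p q S0))" by (rule INF_lower)
      also have "\<dots> = M" using S0(2) True by (simp add: H_k_def)
      finally show ?thesis .
    next
      case False
      then have "M = \<infinity>" using S0(2) by (simp add: H_k_def)
      then show ?thesis by simp
    qed
    show "M \<le> (INF P\<in>?T. ereal (H P))"
    proof (rule INF_greatest)
      fix P assume "P \<in> ?T"
      then obtain S where S: "S \<in> ?I" "feasible m n p q S" "P_of m n p q S = P"
        using tree_to_Pof[OF m n pp pq] by blast
      have "M \<le> H_k m n p q H S" unfolding M_def using finI S(1) by (intro Min_le) auto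
      also have "\<dots> = ereal (H P)" using S by (simp add: H_k_def)
      finally show "M \<le> ereal (H P)" .
    qed
  qed
  show ?thesis using E B C D F unfolding M_def by blast
qed


end
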